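(* Let $\alpha\in(0,1]$ and let $T$ be a bounded linear operator on a separable Hilbert space $\mathcal{H}$ with $\sum_{s=1}^\infty\frac{\|T^s\|^2}{(s+1)^\alpha}\le1$. Then there exist a Hilbert space $E$ and a $D^*_{\alpha,E}$-invariant subspace $\mathcal{N}\subseteq\mathcal{D}_{\alpha,E}$ such that $T$ is unitarily equivalent to $D^*_{\alpha,E}|_{\mathcal{N}}$.
   Context: For $\alpha\in(0,1]$, $\mathcal{D}_\alpha$ is the weighted Dirichlet space of holomorphic $f(z)=\sum_{n\ge0}\hat f(n)z^n$ on the unit disk with $\|f\|^2=\sum_{n\ge0}(n+1)^\alpha|\hat f(n)|^2<\infty$; for a separable Hilbert space $E$, $\mathcal{D}_{\alpha,E}=\mathcal{D}_\alpha\otimes E$ is the corresponding $E$-valued space, and $D^*_{\alpha,E}$ is the adjoint of the operator of multiplication by $z$ on $\mathcal{D}_{\alpha,E}$. *)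

theory Defs
  imports Complex_Main "HOL-Library.Countable_Set"
begin

record 'a chs =
  hcarrier :: "'a set"
  hzero    :: 'a
  hplus    :: "'a \<Rightarrow> 'a \<Rightarrow> 'a"
  hscale   :: "complex \<Rightarrow> 'a \<Rightarrow> 'a"
  hip      :: "'a \<Rightarrow> 'a \<Rightarrow> complex"

definition hnorm :: "'a chs \<Rightarrow> 'a \<Rightarrow> real" where
  "hnorm H x = sqrt (Re (hip H x x))"

definition hminus :: "'a chs \<Rightarrow> 'a \<Rightarrow> 'a \<Rightarrow> 'a" where
  "hminus H x y = hplus H x (hscale H (-1) y)"

definition inner_product_space :: "'a chs \<Rightarrow> bool" where
  "inner_product_space H \<longleftrightarrow>
     hzero H \<in> hcarrier H \<and>
     (\<forall>x\<in>hcarrier H. \<forall>y\<in>hcarrier H. hplus H x y \<in> hcarrier H) \<and>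
     (\<forall>a. \<forall>x\<in>hcarrier H. hscale H a x \<in> hcarrier H) \<and>
     (\<forall>x\<in>hcarrier H. \<forall>y\<in>hcarrier H. \<forall>z\<in>hcarrier H.
        hplus H (hplus H x y) z = hplus H x (hplus H y z)) \<and>
     (\<forall>x\<in>hcarrier H. \<forall>y\<in>hcarrier H. hplus H x y = hplus H y x) \<and>
     (\<forall>x\<in>hcarrier H. hplus H x (hzero H) = x) \<and>
     (\<forall>x\<in>hcarrier H. hplus H x (hscale H (-1) x) = hzero H) \<and>
     (\<forall>x\<in>hcarrier H. hscale H 1 x = x) \<and>
     (\<forall>a b. \<forall>x\<in>hcarrier H. hscale H a (hscale H b x) = hscale H (a * b) x) \<and>
     (\<forall>a. \<forall>x\<in>hcarrier H. \<forall>y\<in>hcarrier H.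
        hscale H a (hplus H x y) = hplus H (hscale H a x) (hscale H a y)) \<and>
     (\<forall>a b. \<forall>x\<in>hcarrier H. hscale H (a + b) x = hplus H (hscale H a x) (hscale H b x)) \<and>
     (\<forall>x\<in>hcarrier H. \<forall>y\<in>hcarrier H. \<forall>z\<in>hcarrier H.
        hip H (hplus H x y) z = hip H x z + hip H y z) \<and>
     (\<forall>a. \<forall>x\<in>hcarrier H. \<forall>y\<in>hcarrier H. hip H (hscale H a x) y = a * hip H x y) \<and>
     (\<forall>x\<in>hcarrier H. \<forall>y\<in>hcarrier H. hip H y x = cnj (hip H x y)) \<and>
     (\<forall>x\<in>hcarrier H. Im (hip H x x) = 0 \<and> Re (hip H x x) \<ge> 0) \<and>
     (\<forall>x\<in>hcarrier H. hip H x x = 0 \<longrightarrow> x = hzero H)"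

definition hilbert_space :: "'a chs \<Rightarrow> bool" where
  "hilbert_space H \<longleftrightarrow> inner_product_space H \<and>
     (\<forall>X. (\<forall>n. X n \<in> hcarrier H) \<and>
          (\<forall>e>0. \<exists>N. \<forall>m\<ge>N. \<forall>n\<ge>N. hnorm H (hminus H (X m) (X n)) < e)
          \<longrightarrow> (\<exists>x\<in>hcarrier H. (\<lambda>n. hnorm H (hminus H (X n) x)) \<longlonglongrightarrow> 0))"

definition separable :: "'a chs \<Rightarrow> bool" where
  "separable H \<longleftrightarrow> (\<exists>S. countable S \<and> S \<subseteq> hcarrier H \<and>
     (\<forall>x\<in>hcarrier H. \<forall>e>0. \<exists>s\<in>S. hnorm H (hminus H x s) < e))"

definition bounded_op :: "'a chs \<Rightarrow> ('a \<Rightarrow> 'a) \<Rightarrow> bool" where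
  "bounded_op H A \<longleftrightarrow>
     (\<forall>x\<in>hcarrier H. A x \<in> hcarrier H) \<and>
     (\<forall>x\<in>hcarrier H. \<forall>y\<in>hcarrier H. A (hplus H x y) = hplus H (A x) (A y)) \<and>
     (\<forall>a. \<forall>x\<in>hcarrier H. A (hscale H a x) = hscale H a (A x)) \<and>
     (\<exists>K. \<forall>x\<in>hcarrier H. hnorm H (A x) \<le> K * hnorm H x)"

definition opnorm :: "'a chs \<Rightarrow> ('a \<Rightarrow> 'a) \<Rightarrow> real" where
  "opnorm H A = Sup {hnorm H (A x) | x. x \<in> hcarrier H \<and> hnorm H x \<le> 1}"

definition adjoint :: "'a chs \<Rightarrow> ('a \<Rightarrow> 'a) \<Rightarrow> ('a \<Rightarrow> 'a)" where
  "adjoint H A = (SOME B. (\<forall>y\<in>hcarrier H. B y \<in> hcarrier H) \<and>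
      (\<forall>x\<in>hcarrier H. \<forall>y\<in>hcarrier H. hip H (A x) y = hip H x (B y)))"

text \<open>The E-valued weighted Dirichlet space D_{alpha,E}, realised through Taylor
  coefficient sequences: f = sum f(n) z^n, norm^2 = sum (n+1)^alpha |f(n)|^2.\<close>
definition dirichlet :: "real \<Rightarrow> 'a chs \<Rightarrow> (nat \<Rightarrow> 'a) chs" where
  "dirichlet \<alpha> E =
     \<lparr> hcarrier = {f. (\<forall>n. f n \<in> hcarrier E) \<and>
                     summable (\<lambda>n. real (n + 1) powr \<alpha> * (hnorm E (f n))\<^sup>2)},
       hzero = (\<lambda>n. hzero E),
       hplus = (\<lambda>f g n. hplus E (f n) (g n)),
       hscale = (\<lambda>a f n. hscale E a (f n)),
       hip = (\<lambda>f g. \<Sum>n. complex_of_real (real (n + 1) powr \<alpha>) * hip E (f n) (g n)) \<rparr>"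

definition mult_z :: "'a chs \<Rightarrow> (nat \<Rightarrow> 'a) \<Rightarrow> (nat \<Rightarrow> 'a)" where
  "mult_z E f = (\<lambda>n. if n = 0 then hzero E else f (n - 1))"

definition Dstar :: "real \<Rightarrow> 'a chs \<Rightarrow> (nat \<Rightarrow> 'a) \<Rightarrow> (nat \<Rightarrow> 'a)" where
  "Dstar \<alpha> E = adjoint (dirichlet \<alpha> E) (mult_z E)"

definition closed_subspace :: "'a chs \<Rightarrow> 'a set \<Rightarrow> bool" where
  "closed_subspace H N \<longleftrightarrow> N \<subseteq> hcarrier H \<and> hzero H \<in> N \<and>
     (\<forall>x\<in>N. \<forall>y\<in>N. hplus H x y \<in> N) \<and> (\<forall>a. \<forall>x\<in>N. hscale H a x \<in> N) \<and>
     (\<forall>X x. (\<forall>n. X n \<in> N) \<and> x \<in> hcarrier H \<and>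
        (\<lambda>n. hnorm H (hminus H (X n) x)) \<longlonglongrightarrow> 0 \<longrightarrow> x \<in> N)"

definition unitarily_equivalent ::
  "'a chs \<Rightarrow> ('a \<Rightarrow> 'a) \<Rightarrow> 'b chs \<Rightarrow> 'b set \<Rightarrow> ('b \<Rightarrow> 'b) \<Rightarrow> bool" where
  "unitarily_equivalent H T K N B \<longleftrightarrow>
     (\<exists>U. bij_betw U (hcarrier H) N \<and>
          (\<forall>x\<in>hcarrier H. \<forall>y\<in>hcarrier H. U (hplus H x y) = hplus K (U x) (U y)) \<and>
          (\<forall>a. \<forall>x\<in>hcarrier H. U (hscale H a x) = hscale K a (U x)) \<and>
          (\<forall>x\<in>hcarrier H. \<forall>y\<in>hcarrier H. hip K (U x) (U y) = hip H x y) \<and>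
          (\<forall>x\<in>hcarrier H. U (T x) = B (U x)))"

end

theory Submission
  imports Defs
begin

primrec vsum :: "'a chs \<Rightarrow> (nat \<Rightarrow> 'a) \<Rightarrow> nat \<Rightarrow> 'a" where
  "vsum H f 0 = hzero H"
| "vsum H f (Suc n) = hplus H (vsum H f n) (f n)"

locale ips =
  fixes H :: "'a chs"
  assumes ips: "inner_product_space H"
begin

lemma zero_in[simp]: "hzero H \<in> hcarrier H"
  using ips[unfolded inner_product_space_def, THEN conjunct1] by blast
lemma add_in[simp]: "x \<in> hcarrier H \<Longrightarrow> y \<in> hcarrier H \<Longrightarrow> hplus H x y \<in> hcarrier H"
  using ips[unfolded inner_product_space_def, THEN conjunct2, THEN conjunct1] by blast
lemma sc_in[simp]: "x \<in> hcarrier H \<Longrightarrow> hscale H a x \<in> hcarrier H"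
  using ips[unfolded inner_product_space_def, THEN conjunct2, THEN conjunct2, THEN conjunct1] by blast
lemma minus_in[simp]: "x \<in> hcarrier H \<Longrightarrow> y \<in> hcarrier H \<Longrightarrow> hminus H x y \<in> hcarrier H"
  unfolding hminus_def by simp
lemma add_assoc: "x \<in> hcarrier H \<Longrightarrow> y \<in> hcarrier H \<Longrightarrow> z \<in> hcarrier H \<Longrightarrow>
   hplus H (hplus H x y) z = hplus H x (hplus H y z)"
  using ips[unfolded inner_product_space_def, THEN conjunct2, THEN conjunct2, THEN conjunct2, THEN conjunct1] by blast
lemma add_comm: "x \<in> hcarrier H \<Longrightarrow> y \<in> hcarrier H \<Longrightarrow> hplus H x y = hplus H y x"
  using ips[unfolded inner_product_space_def, THEN conjunct2, THEN conjunct2, THEN conjunct2, THEN conjunct2, THEN conjunct1] by blast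
lemma add_zero[simp]: "x \<in> hcarrier H \<Longrightarrow> hplus H x (hzero H) = x"
  using ips[unfolded inner_product_space_def, THEN conjunct2, THEN conjunct2, THEN conjunct2, THEN conjunct2, THEN conjunct2, THEN conjunct1] by blast
lemma add_neg: "x \<in> hcarrier H \<Longrightarrow> hplus H x (hscale H (-1) x) = hzero H"
  using ips[unfolded inner_product_space_def, THEN conjunct2, THEN conjunct2, THEN conjunct2, THEN conjunct2, THEN conjunct2, THEN conjunct2, THEN conjunct1] by blast
lemma sc_one[simp]: "x \<in> hcarrier H \<Longrightarrow> hscale H 1 x = x"
  using ips[unfolded inner_product_space_def, THEN conjunct2, THEN conjunct2, THEN conjunct2, THEN conjunct2, THEN conjunct2, THEN conjunct2, THEN conjunct2, THEN conjunct1] by blast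
lemma sc_sc: "x \<in> hcarrier H \<Longrightarrow> hscale H a (hscale H b x) = hscale H (a * b) x"
  using ips[unfolded inner_product_space_def, THEN conjunct2, THEN conjunct2, THEN conjunct2, THEN conjunct2, THEN conjunct2, THEN conjunct2, THEN conjunct2, THEN conjunct2, THEN conjunct1] by blast
lemma ip_add[simp]: "x \<in> hcarrier H \<Longrightarrow> y \<in> hcarrier H \<Longrightarrow> z \<in> hcarrier H \<Longrightarrow>
   hip H (hplus H x y) z = hip H x z + hip H y z"
  using ips[unfolded inner_product_space_def, THEN conjunct2, THEN conjunct2, THEN conjunct2, THEN conjunct2, THEN conjunct2, THEN conjunct2, THEN conjunct2, THEN conjunct2, THEN conjunct2, THEN conjunct2, THEN conjunct2, THEN conjunct1] by blast
lemma ip_sc[simp]: "x \<in> hcarrier H \<Longrightarrow> y \<in> hcarrier H \<Longrightarrow> hip H (hscale H a x) y = a * hip H x y"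
  using ips[unfolded inner_product_space_def, THEN conjunct2, THEN conjunct2, THEN conjunct2, THEN conjunct2, THEN conjunct2, THEN conjunct2, THEN conjunct2, THEN conjunct2, THEN conjunct2, THEN conjunct2, THEN conjunct2, THEN conjunct2, THEN conjunct1] by blast
lemma ip_conj: "x \<in> hcarrier H \<Longrightarrow> y \<in> hcarrier H \<Longrightarrow> hip H y x = cnj (hip H x y)"
  using ips[unfolded inner_product_space_def, THEN conjunct2, THEN conjunct2, THEN conjunct2, THEN conjunct2, THEN conjunct2, THEN conjunct2, THEN conjunct2, THEN conjunct2, THEN conjunct2, THEN conjunct2, THEN conjunct2, THEN conjunct2, THEN conjunct2, THEN conjunct1] by blast
lemma ip_pos: "x \<in> hcarrier H \<Longrightarrow> Im (hip H x x) = 0 \<and> 0 \<le> Re (hip H x x)"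
  using ips[unfolded inner_product_space_def, THEN conjunct2, THEN conjunct2, THEN conjunct2, THEN conjunct2, THEN conjunct2, THEN conjunct2, THEN conjunct2, THEN conjunct2, THEN conjunct2, THEN conjunct2, THEN conjunct2, THEN conjunct2, THEN conjunct2, THEN conjunct2, THEN conjunct1] by blast
lemma ip_def0: "x \<in> hcarrier H \<Longrightarrow> hip H x x = 0 \<Longrightarrow> x = hzero H"
  using ips[unfolded inner_product_space_def, THEN conjunct2, THEN conjunct2, THEN conjunct2, THEN conjunct2, THEN conjunct2, THEN conjunct2, THEN conjunct2, THEN conjunct2, THEN conjunct2, THEN conjunct2, THEN conjunct2, THEN conjunct2, THEN conjunct2, THEN conjunct2, THEN conjunct2] by blast

lemma ip_add_r[simp]: "x \<in> hcarrier H \<Longrightarrow> y \<in> hcarrier H \<Longrightarrow> z \<in> hcarrier H \<Longrightarrow>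
   hip H x (hplus H y z) = hip H x y + hip H x z"
  by (subst ip_conj, simp_all, subst (1 2) ip_conj, simp_all)
lemma ip_sc_r[simp]: "x \<in> hcarrier H \<Longrightarrow> y \<in> hcarrier H \<Longrightarrow> hip H x (hscale H a y) = cnj a * hip H x y"
  by (subst ip_conj, simp_all, subst ip_conj, simp_all)
lemma ip_zero_l[simp]: "y \<in> hcarrier H \<Longrightarrow> hip H (hzero H) y = 0"
proof -
  assume y: "y \<in> hcarrier H"
  have "hip H (hzero H) y + hip H (hzero H) y = hip H (hzero H) y"
    using ip_add[of "hzero H" "hzero H" y] y by simp
  then show ?thesis by simp
qed
lemma ip_zero_r[simp]: "y \<in> hcarrier H \<Longrightarrow> hip H y (hzero H) = 0"
  by (subst ip_conj, simp_all)
lemma ip_minus_l[simp]: "x \<in> hcarrier H \<Longrightarrow> y \<in> hcarrier H \<Longrightarrow> z \<in> hcarrier H \<Longrightarrow>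
   hip H (hminus H x y) z = hip H x z - hip H y z"
  unfolding hminus_def by simp
lemma ip_minus_r[simp]: "x \<in> hcarrier H \<Longrightarrow> y \<in> hcarrier H \<Longrightarrow> z \<in> hcarrier H \<Longrightarrow>
   hip H z (hminus H x y) = hip H z x - hip H z y"
  unfolding hminus_def by simp

lemma ip_ext:
  assumes x: "x \<in> hcarrier H" and y: "y \<in> hcarrier H"
    and eq: "\<And>z. z \<in> hcarrier H \<Longrightarrow> hip H x z = hip H y z"
  shows "x = y"
proof -
  let ?d = "hminus H x y"
  have d: "?d \<in> hcarrier H" using x y by simp
  have "hip H ?d ?d = hip H x ?d - hip H y ?d" unfolding hminus_def using x y d by simp
  also have "\<dots> = 0" using eq[OF d] by simp
  finally have "hip H ?d ?d = 0" .
  then have d0: "?d = hzero H" using ip_def0 d by blast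
  have "hplus H y ?d = x"
    unfolding hminus_def using x y
    by (metis add_assoc add_comm add_neg add_zero sc_in)
  then show ?thesis using d0 y by simp
qed

lemma zero_iff: "x \<in> hcarrier H \<Longrightarrow> x = hzero H \<longleftrightarrow> hip H x x = 0"
  using ip_def0 by auto

lemma ip_self_real: "x \<in> hcarrier H \<Longrightarrow> hip H x x = complex_of_real (Re (hip H x x))"
  using ip_pos by (simp add: complex_eq_iff)

lemma nm_sq: "x \<in> hcarrier H \<Longrightarrow> (hnorm H x)\<^sup>2 = Re (hip H x x)"
  unfolding hnorm_def using ip_pos[of x] by simp

lemma ip_self: "x \<in> hcarrier H \<Longrightarrow> hip H x x = complex_of_real ((hnorm H x)\<^sup>2)"
  using ip_self_real nm_sq by simp

lemma nm_nonneg[simp]: "x \<in> hcarrier H \<Longrightarrow> 0 \<le> hnorm H x"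
  unfolding hnorm_def using ip_pos[of x] by simp

lemma nm_zero_iff: "x \<in> hcarrier H \<Longrightarrow> hnorm H x = 0 \<longleftrightarrow> x = hzero H"
proof -
  assume x: "x \<in> hcarrier H"
  have "hip H x x = 0 \<longleftrightarrow> Re (hip H x x) = 0" using ip_pos[OF x] by (simp add: complex_eq_iff)
  then show ?thesis unfolding hnorm_def using zero_iff[OF x] by simp
qed

lemma nm_zero[simp]: "hnorm H (hzero H) = 0"
  using nm_zero_iff by simp

lemma vsum_in[simp]: "(\<And>j. j < n \<Longrightarrow> f j \<in> hcarrier H) \<Longrightarrow> vsum H f n \<in> hcarrier H"
  by (induction n) auto

lemma ip_vsum_l: "(\<And>j. j < n \<Longrightarrow> f j \<in> hcarrier H) \<Longrightarrow> z \<in> hcarrier H \<Longrightarrow>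
   hip H (vsum H f n) z = (\<Sum>j<n. hip H (f j) z)"
  by (induction n) auto

lemma ip_vsum_r: "(\<And>j. j < n \<Longrightarrow> f j \<in> hcarrier H) \<Longrightarrow> z \<in> hcarrier H \<Longrightarrow>
   hip H z (vsum H f n) = (\<Sum>j<n. hip H z (f j))"
  by (induction n) auto

lemma vsum_cong: "(\<And>j. j < n \<Longrightarrow> f j = g j) \<Longrightarrow> vsum H f n = vsum H g n"
  by (induction n) auto

end

lemma quad_cs:
  fixes p q B :: real
  assumes q0: "0 \<le> q" and B0: "0 \<le> B" and key: "\<And>s. 0 \<le> p - 2 * s * B + s\<^sup>2 * B * q"
  shows "B \<le> p * q"
proof (cases "q > 0")
  case True
  have k1: "0 \<le> p - 2 * (1/q) * B + (1/q)\<^sup>2 * B * q" by (rule key)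
  have "(1/q)\<^sup>2 * B * q = B / q" using True by (simp add: power2_eq_square)
  moreover have "2 * (1/q) * B = 2 * (B / q)" by simp
  ultimately have "0 \<le> p - B / q" using k1 by linarith
  then have "B / q \<le> p" by simp
  then show ?thesis using True by (simp add: pos_divide_le_eq mult.commute)
next
  case False
  then have q: "q = 0" using q0 by simp
  have "B = 0"
  proof (rule ccontr)
    assume "B \<noteq> 0"
    then have Bp: "B > 0" using B0 by simp
    have "0 \<le> p - 2 * ((p + 1) / (2 * B)) * B" using key[of "(p+1)/(2*B)"] q by simp
    also have "2 * ((p + 1) / (2 * B)) * B = p + 1" using Bp by simp
    finally show False by simp
  qed
  then show ?thesis using q by simp
qed


locale psform = ips +
  fixes F :: "'a \<Rightarrow> 'a \<Rightarrow> complex"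
  assumes F_add[simp]: "x \<in> hcarrier H \<Longrightarrow> y \<in> hcarrier H \<Longrightarrow> z \<in> hcarrier H \<Longrightarrow>
      F (hplus H x y) z = F x z + F y z"
    and F_sc[simp]: "x \<in> hcarrier H \<Longrightarrow> y \<in> hcarrier H \<Longrightarrow> F (hscale H a x) y = a * F x y"
    and F_herm: "x \<in> hcarrier H \<Longrightarrow> y \<in> hcarrier H \<Longrightarrow> F y x = cnj (F x y)"
    and F_pos: "x \<in> hcarrier H \<Longrightarrow> Im (F x x) = 0 \<and> 0 \<le> Re (F x x)"
begin

lemma F_add_r[simp]: "x \<in> hcarrier H \<Longrightarrow> y \<in> hcarrier H \<Longrightarrow> z \<in> hcarrier H \<Longrightarrow>
   F x (hplus H y z) = F x y + F x z"
  by (subst F_herm, simp_all, subst (1 2) F_herm, simp_all)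
lemma F_sc_r[simp]: "x \<in> hcarrier H \<Longrightarrow> y \<in> hcarrier H \<Longrightarrow> F x (hscale H a y) = cnj a * F x y"
  by (subst F_herm, simp_all, subst F_herm, simp_all)
lemma F_zero_l[simp]: "y \<in> hcarrier H \<Longrightarrow> F (hzero H) y = 0"
proof -
  assume y: "y \<in> hcarrier H"
  have "F (hzero H) y + F (hzero H) y = F (hzero H) y"
    using F_add[of "hzero H" "hzero H" y] y by simp
  then show ?thesis by simp
qed
lemma F_zero_r[simp]: "y \<in> hcarrier H \<Longrightarrow> F y (hzero H) = 0"
  by (subst F_herm, simp_all)
lemma F_minus_l[simp]: "x \<in> hcarrier H \<Longrightarrow> y \<in> hcarrier H \<Longrightarrow> z \<in> hcarrier H \<Longrightarrow>
   F (hminus H x y) z = F x z - F y z"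
  unfolding hminus_def by simp
lemma F_minus_r[simp]: "x \<in> hcarrier H \<Longrightarrow> y \<in> hcarrier H \<Longrightarrow> z \<in> hcarrier H \<Longrightarrow>
   F z (hminus H x y) = F z x - F z y"
  unfolding hminus_def by simp
lemma F_self_real: "x \<in> hcarrier H \<Longrightarrow> F x x = complex_of_real (Re (F x x))"
  using F_pos by (simp add: complex_eq_iff)
lemma F_vsum_l: "(\<And>j. j < n \<Longrightarrow> f j \<in> hcarrier H) \<Longrightarrow> z \<in> hcarrier H \<Longrightarrow>
   F (vsum H f n) z = (\<Sum>j<n. F (f j) z)"
  by (induction n) auto
lemma F_vsum_r: "(\<And>j. j < n \<Longrightarrow> f j \<in> hcarrier H) \<Longrightarrow> z \<in> hcarrier H \<Longrightarrow>
   F z (vsum H f n) = (\<Sum>j<n. F z (f j))"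
  by (induction n) auto

lemma F_cs_sq:
  assumes x: "x \<in> hcarrier H" and y: "y \<in> hcarrier H"
  shows "(cmod (F x y))\<^sup>2 \<le> Re (F x x) * Re (F y y)"
proof -
  define p where "p = Re (F x x)"
  define q where "q = Re (F y y)"
  define b where "b = F x y"
  define B where "B = (cmod b)\<^sup>2"
  have p0: "0 \<le> p" and q0: "0 \<le> q" using F_pos x y unfolding p_def q_def by auto
  have e1: "F y x = cnj b" using F_herm[OF x y] b_def by simp
  have e2: "b * cnj b = complex_of_real B" unfolding B_def by (rule complex_norm_square[symmetric])
  have e2': "cnj b * b = complex_of_real B" using e2 by (simp add: mult.commute)
  have e3: "F x x = complex_of_real p" "F y y = complex_of_real q"
    using F_self_real x y p_def q_def by auto
  have key: "0 \<le> p - 2 * s * B + s\<^sup>2 * B * q" for s :: real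
  proof -
    define t where "t = complex_of_real s * b"
    define v where "v = hminus H x (hscale H t y)"
    have v: "v \<in> hcarrier H" unfolding v_def using x y by simp
    have h1: "F v v = F x x - cnj t * F x y - (t * F y x - (t * cnj t) * F y y)"
      unfolding v_def using x y by (simp add: algebra_simps)
    have h2: "cnj t * F x y = complex_of_real (s * B)"
      unfolding t_def b_def[symmetric] using e2' by (simp add: mult.assoc)
    have h3: "t * F y x = complex_of_real (s * B)"
      unfolding t_def e1 using e2 by (simp add: mult.assoc)
    have "t * cnj t = complex_of_real (s * s) * (b * cnj b)" unfolding t_def by simp
    then have h4: "t * cnj t = complex_of_real (s\<^sup>2 * B)" using e2 by (simp add: power2_eq_square)
    have "F v v = complex_of_real (p - 2 * s * B + s\<^sup>2 * B * q)"
      unfolding h1 h2 h3 h4 e3 by simp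
    then have "Re (F v v) = p - 2 * s * B + s\<^sup>2 * B * q" by simp
    then show ?thesis using F_pos[OF v] by simp
  qed
  have "B \<le> p * q" by (rule quad_cs[OF q0 _ key]) (simp add: B_def)
  then show ?thesis by (simp add: B_def b_def p_def q_def)
qed

lemma F_cs:
  assumes x: "x \<in> hcarrier H" and y: "y \<in> hcarrier H"
  shows "cmod (F x y) \<le> sqrt (Re (F x x)) * sqrt (Re (F y y))"
proof -
  have "cmod (F x y) = sqrt ((cmod (F x y))\<^sup>2)" by simp
  also have "\<dots> \<le> sqrt (Re (F x x) * Re (F y y))" using F_cs_sq[OF x y] real_sqrt_le_mono by blast
  also have "\<dots> = sqrt (Re (F x x)) * sqrt (Re (F y y))" by (simp add: real_sqrt_mult)
  finally show ?thesis .
qed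

lemma F_null_l: "n \<in> hcarrier H \<Longrightarrow> y \<in> hcarrier H \<Longrightarrow> Re (F n n) = 0 \<Longrightarrow> F n y = 0"
  using F_cs_sq[of n y] by (simp add: power2_less_eq_zero_iff)
lemma F_null_r: "n \<in> hcarrier H \<Longrightarrow> y \<in> hcarrier H \<Longrightarrow> Re (F n n) = 0 \<Longrightarrow> F y n = 0"
  using F_herm[of n y] F_null_l[of n y] by simp

lemma F_tri:
  assumes x: "x \<in> hcarrier H" and y: "y \<in> hcarrier H"
  shows "sqrt (Re (F (hplus H x y) (hplus H x y))) \<le> sqrt (Re (F x x)) + sqrt (Re (F y y))"
proof -
  have p0: "0 \<le> Re (F x x)" and q0: "0 \<le> Re (F y y)" using F_pos x y by auto
  have "Re (F (hplus H x y) (hplus H x y)) = Re (F x x) + Re (F x y) + Re (F y x) + Re (F y y)"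
    using x y by simp
  also have "Re (F y x) = Re (F x y)" using F_herm[OF x y] by simp
  also have "Re (F x y) \<le> sqrt (Re (F x x)) * sqrt (Re (F y y))"
    using F_cs[OF x y] complex_Re_le_cmod order_trans by blast
  finally have "Re (F (hplus H x y) (hplus H x y)) \<le> (sqrt (Re (F x x)) + sqrt (Re (F y y)))\<^sup>2"
    using p0 q0 by (simp add: power2_eq_square algebra_simps)
  then show ?thesis
    by (metis add_nonneg_nonneg p0 q0 real_sqrt_ge_zero real_sqrt_le_mono real_sqrt_unique)
qed

end

lemma (in ips) psform_ip: "psform H (hip H)"
proof unfold_locales
  fix x y assume "x \<in> hcarrier H" "y \<in> hcarrier H"
  then show "hip H y x = cnj (hip H x y)" by (rule ip_conj)
next
  fix x assume "x \<in> hcarrier H"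
  then show "Im (hip H x x) = 0 \<and> 0 \<le> Re (hip H x x)" by (rule ip_pos)
qed simp_all

context ips
begin

lemma cs: "x \<in> hcarrier H \<Longrightarrow> y \<in> hcarrier H \<Longrightarrow> cmod (hip H x y) \<le> hnorm H x * hnorm H y"
  using psform.F_cs[OF psform_ip] unfolding hnorm_def by blast

lemma tri: "x \<in> hcarrier H \<Longrightarrow> y \<in> hcarrier H \<Longrightarrow> hnorm H (hplus H x y) \<le> hnorm H x + hnorm H y"
  using psform.F_tri[OF psform_ip] unfolding hnorm_def by blast

lemma nm_sc: "x \<in> hcarrier H \<Longrightarrow> hnorm H (hscale H a x) = cmod a * hnorm H x"
proof -
  assume x: "x \<in> hcarrier H"
  have "hip H (hscale H a x) (hscale H a x) = (a * cnj a) * hip H x x"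
    using x by (simp add: mult.assoc)
  also have "\<dots> = complex_of_real ((cmod a)\<^sup>2 * Re (hip H x x))"
    using ip_self_real[OF x] complex_norm_square[of a, symmetric] by (metis of_real_mult)
  finally have "Re (hip H (hscale H a x) (hscale H a x)) = (cmod a)\<^sup>2 * Re (hip H x x)" by simp
  then show ?thesis unfolding hnorm_def by (simp add: real_sqrt_mult)
qed

end

lemma vsum_cong': "(\<And>j. j < n \<Longrightarrow> f j = g j) \<Longrightarrow> vsum H f n = vsum H g n"
  by (induction n) auto

definition nrmz :: "'a chs \<Rightarrow> ('a \<Rightarrow> 'a \<Rightarrow> complex) \<Rightarrow> 'a \<Rightarrow> 'a" where
  "nrmz H F u = (if 0 < Re (F u u) then hscale H (complex_of_real (1 / sqrt (Re (F u u)))) u else hzero H)"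

definition proj :: "'a chs \<Rightarrow> ('a \<Rightarrow> 'a \<Rightarrow> complex) \<Rightarrow> (nat \<Rightarrow> 'a) \<Rightarrow> nat \<Rightarrow> 'a \<Rightarrow> 'a" where
  "proj H F w K x = vsum H (\<lambda>j. hscale H (F x (w j)) (w j)) K"

primrec gsf :: "'a chs \<Rightarrow> ('a \<Rightarrow> 'a \<Rightarrow> complex) \<Rightarrow> (nat \<Rightarrow> 'a) \<Rightarrow> nat \<Rightarrow> nat \<Rightarrow> 'a" where
  "gsf H F v 0 = (\<lambda>_. hzero H)"
| "gsf H F v (Suc k) = (gsf H F v k)(k := nrmz H F (hminus H (v k) (proj H F (gsf H F v k) k (v k))))"

definition gs :: "'a chs \<Rightarrow> ('a \<Rightarrow> 'a \<Rightarrow> complex) \<Rightarrow> (nat \<Rightarrow> 'a) \<Rightarrow> nat \<Rightarrow> 'a" where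
  "gs H F v k = gsf H F v (Suc k) k"

lemma gsf_stable: "j < n \<Longrightarrow> gsf H F v n j = gs H F v j"
  by (induction n) (auto simp: gs_def less_Suc_eq)

lemma gs_eq: "gs H F v k = nrmz H F (hminus H (v k) (proj H F (gs H F v) k (v k)))"
proof -
  have "proj H F (gsf H F v k) k (v k) = proj H F (gs H F v) k (v k)"
    unfolding proj_def by (rule vsum_cong') (simp add: gsf_stable)
  then show ?thesis by (simp add: gs_def)
qed

context ips
begin

lemma minus_zero_eq:
  assumes a: "a \<in> hcarrier H" and b: "b \<in> hcarrier H" and e: "hminus H a b = hzero H"
  shows "a = b"
proof (rule ip_ext[OF a b])
  fix z assume z: "z \<in> hcarrier H"
  have "hip H (hminus H a b) z = 0" using e z by simp
  then show "hip H a z = hip H b z" using a b z by simp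
qed

lemma proj_in[simp]: "(\<And>j. j < K \<Longrightarrow> w j \<in> hcarrier H) \<Longrightarrow> proj H F w K x \<in> hcarrier H"
  unfolding proj_def by (rule vsum_in) simp

lemma hip_proj: "(\<And>j. j < K \<Longrightarrow> w j \<in> hcarrier H) \<Longrightarrow> z \<in> hcarrier H \<Longrightarrow>
   hip H (proj H F w K x) z = (\<Sum>j<K. F x (w j) * hip H (w j) z)"
  unfolding proj_def by (subst ip_vsum_l) auto

end

context psform
begin

lemma nrmz_in[simp]: "u \<in> hcarrier H \<Longrightarrow> nrmz H F u \<in> hcarrier H"
  unfolding nrmz_def by simp

lemma nrmz_norm: "u \<in> hcarrier H \<Longrightarrow> nrmz H F u = hzero H \<or> F (nrmz H F u) (nrmz H F u) = 1"
proof (cases "0 < Re (F u u)")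
  case True
  assume u: "u \<in> hcarrier H"
  define r where "r = Re (F u u)"
  have r: "0 < r" using True r_def by simp
  have "F (nrmz H F u) (nrmz H F u) = complex_of_real (1 / sqrt r) * complex_of_real (1 / sqrt r) * F u u"
    using True u unfolding nrmz_def r_def by (simp add: mult.assoc)
  also have "F u u = complex_of_real r" using F_self_real[OF u] r_def by simp
  also have "complex_of_real (1 / sqrt r) * complex_of_real (1 / sqrt r) * complex_of_real r
      = complex_of_real (1 / sqrt r * (1 / sqrt r) * r)" by (simp only: of_real_mult)
  also have "1 / sqrt r * (1 / sqrt r) * r = 1"
  proof -
    have "sqrt r * sqrt r = r" using r by simp
    then show ?thesis using r by (simp add: field_simps)
  qed
  finally show ?thesis by simp
next
  case False then show ?thesis unfolding nrmz_def by simp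
qed

lemma F_proj_l: "(\<And>j. j < K \<Longrightarrow> w j \<in> hcarrier H) \<Longrightarrow> x \<in> hcarrier H \<Longrightarrow> z \<in> hcarrier H \<Longrightarrow>
   F (proj H F w K x) z = (\<Sum>j<K. F x (w j) * F (w j) z)"
  unfolding proj_def by (subst F_vsum_l) auto

lemma F_proj_r: "(\<And>j. j < K \<Longrightarrow> w j \<in> hcarrier H) \<Longrightarrow> x \<in> hcarrier H \<Longrightarrow> z \<in> hcarrier H \<Longrightarrow>
   F z (proj H F w K x) = (\<Sum>j<K. cnj (F x (w j)) * F z (w j))"
  unfolding proj_def by (subst F_vsum_r) auto

end

locale gsloc = psform +
  fixes v :: "nat \<Rightarrow> 'a"
  assumes v_in[simp]: "\<And>k. v k \<in> hcarrier H"
begin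

abbreviation "gw \<equiv> gs H F v"
abbreviation "gP \<equiv> proj H F (gs H F v)"

lemma gw_in[simp]: "gw k \<in> hcarrier H"
proof (induction k rule: less_induct)
  case (less k)
  then show ?case by (subst gs_eq) (simp add: proj_in)
qed

lemma gP_in[simp]: "gP K x \<in> hcarrier H"
  by (rule proj_in) simp

lemma gw_norm: "gw k = hzero H \<or> F (gw k) (gw k) = 1"
  by (subst (1 2 3) gs_eq) (rule nrmz_norm, simp)

lemma Fww: "x \<in> hcarrier H \<Longrightarrow> F x (gw j) * F (gw j) (gw j) = F x (gw j)"
  using gw_norm[of j] by auto

lemma gw_orth_lt: "j < i \<Longrightarrow> F (gw i) (gw j) = 0"
proof (induction i arbitrary: j rule: less_induct)
  case (less i)
  have orth: "F (gw l) (gw j) = 0" if "l < i" "l \<noteq> j" for l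
  proof (cases "j < l")
    case True then show ?thesis using less.IH that by blast
  next
    case False
    then have "l < j" using that by simp
    then have "F (gw j) (gw l) = 0" using less.IH less.prems by blast
    then show ?thesis using F_herm[of "gw j" "gw l"] by simp
  qed
  define u where "u = hminus H (v i) (gP i (v i))"
  have u: "u \<in> hcarrier H" unfolding u_def by simp
  have "(\<Sum>l<i. F (v i) (gw l) * F (gw l) (gw j)) = F (v i) (gw j) * F (gw j) (gw j)"
  proof -
    have "(\<Sum>l<i. F (v i) (gw l) * F (gw l) (gw j)) =
        F (v i) (gw j) * F (gw j) (gw j) + (\<Sum>l\<in>{..<i} - {j}. F (v i) (gw l) * F (gw l) (gw j))"
      using less.prems by (subst sum.remove[of _ j]) auto
    also have "(\<Sum>l\<in>{..<i} - {j}. F (v i) (gw l) * F (gw l) (gw j)) = 0"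
      using orth by (intro sum.neutral) auto
    finally show ?thesis by simp
  qed
  then have "F u (gw j) = 0" unfolding u_def using Fww[of "v i" j] by (simp add: F_proj_l)
  moreover have "gw i = nrmz H F u" unfolding u_def by (rule gs_eq)
  ultimately show ?case unfolding nrmz_def using u by auto
qed

lemma gw_orth: "i \<noteq> j \<Longrightarrow> F (gw i) (gw j) = 0"
proof (cases "j < i")
  case True then show ?thesis by (rule gw_orth_lt)
next
  case False
  assume "i \<noteq> j"
  with False have "i < j" by simp
  then have "F (gw j) (gw i) = 0" by (rule gw_orth_lt)
  then show ?thesis using F_herm[of "gw j" "gw i"] by simp
qed

lemma sum_single: "j < K \<Longrightarrow> (\<Sum>l<K. c l * F (gw l) (gw j)) = c j * F (gw j) (gw j)"
proof -
  assume j: "j < K"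
  have "(\<Sum>l<K. c l * F (gw l) (gw j)) = c j * F (gw j) (gw j) + (\<Sum>l\<in>{..<K} - {j}. c l * F (gw l) (gw j))"
    using j by (subst sum.remove[of _ j]) auto
  also have "(\<Sum>l\<in>{..<K} - {j}. c l * F (gw l) (gw j)) = 0"
    using gw_orth by (intro sum.neutral) auto
  finally show ?thesis by simp
qed

lemma perp: "x \<in> hcarrier H \<Longrightarrow> j < K \<Longrightarrow> F (hminus H x (gP K x)) (gw j) = 0"
  using sum_single[of j K "\<lambda>l. F x (gw l)"] Fww[of x j] by (simp add: F_proj_l)

lemma perp_proj:
  assumes x: "x \<in> hcarrier H" and y: "y \<in> hcarrier H"
  shows "F (hminus H x (gP K x)) (gP K y) = 0"
proof -
  have "F (hminus H x (gP K x)) (gP K y) = (\<Sum>j<K. cnj (F y (gw j)) * F (hminus H x (gP K x)) (gw j))"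
    by (rule F_proj_r) (simp_all add: x y)
  also have "\<dots> = 0" by (rule sum.neutral) (simp add: perp[OF x])
  finally show ?thesis .
qed

lemma pyth: "x \<in> hcarrier H \<Longrightarrow> y \<in> hcarrier H \<Longrightarrow>
  F (hminus H x (gP K x)) (hminus H y (gP K y)) = F x y - (\<Sum>j<K. F x (gw j) * cnj (F y (gw j)))"
proof -
  assume x: "x \<in> hcarrier H" and y: "y \<in> hcarrier H"
  have "F (hminus H x (gP K x)) (hminus H y (gP K y)) = F (hminus H x (gP K x)) y"
    using perp_proj[OF x y] x y by simp
  also have "\<dots> = F x y - (\<Sum>j<K. F x (gw j) * F (gw j) y)"
    using x y by (simp add: F_proj_l)
  also have "(\<Sum>j<K. F x (gw j) * F (gw j) y) = (\<Sum>j<K. F x (gw j) * cnj (F y (gw j)))"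
  proof (intro sum.cong refl)
    fix j show "F x (gw j) * F (gw j) y = F x (gw j) * cnj (F y (gw j))"
      using F_herm[of y "gw j"] y by simp
  qed
  finally show ?thesis .
qed

lemma pyth_re: "x \<in> hcarrier H \<Longrightarrow>
  Re (F (hminus H x (gP K x)) (hminus H x (gP K x))) = Re (F x x) - (\<Sum>j<K. (cmod (F x (gw j)))\<^sup>2)"
proof -
  assume x: "x \<in> hcarrier H"
  have e: "\<And>j. F x (gw j) * cnj (F x (gw j)) = complex_of_real ((cmod (F x (gw j)))\<^sup>2)"
    by (rule complex_norm_square[symmetric])
  have "(\<Sum>j<K. F x (gw j) * cnj (F x (gw j))) = complex_of_real (\<Sum>j<K. (cmod (F x (gw j)))\<^sup>2)"
    by (simp only: e of_real_sum)
  then show ?thesis using pyth[OF x x] by simp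
qed

lemma null_step: "Re (F (hminus H (v k) (gP (Suc k) (v k))) (hminus H (v k) (gP (Suc k) (v k)))) = 0"
proof -
  define u where "u = hminus H (v k) (gP k (v k))"
  have u: "u \<in> hcarrier H" unfolding u_def by simp
  have "Re (F (hminus H (v k) (gP (Suc k) (v k))) (hminus H (v k) (gP (Suc k) (v k))))
      = Re (F (v k) (v k)) - (\<Sum>j<k. (cmod (F (v k) (gw j)))\<^sup>2) - (cmod (F (v k) (gw k)))\<^sup>2"
    unfolding pyth_re[OF v_in] by simp
  also have "Re (F (v k) (v k)) - (\<Sum>j<k. (cmod (F (v k) (gw j)))\<^sup>2) = Re (F u u)"
    unfolding u_def pyth_re[OF v_in] by simp
  also have "(cmod (F (v k) (gw k)))\<^sup>2 = Re (F u u)"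
  proof (cases "0 < Re (F u u)")
    case True
    define r where "r = Re (F u u)"
    have r: "0 < r" using True r_def by simp
    have wk: "gw k = hscale H (complex_of_real (1 / sqrt r)) u"
      using gs_eq[of H F v k] True unfolding u_def[symmetric] r_def nrmz_def by simp
    have "F (gP k (v k)) (gw k) = 0"
      by (simp add: F_proj_l gw_orth)
    then have "F (v k) (gw k) = F u (gw k)" unfolding u_def by simp
    also have "\<dots> = complex_of_real (1 / sqrt r) * F u u" using u wk by simp
    also have "F u u = complex_of_real r" using F_self_real[OF u] r_def by simp
    finally have "F (v k) (gw k) = complex_of_real (1 / sqrt r * r)" by simp
    then have "cmod (F (v k) (gw k)) = sqrt r" using r
      by (simp add: abs_of_pos real_div_sqrt)
    then show ?thesis using r r_def by simp
  next
    case False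
    then have "Re (F u u) = 0" using F_pos[OF u] by simp
    moreover have "gw k = hzero H" using gs_eq[of H F v k] False unfolding u_def[symmetric] nrmz_def by simp
    ultimately show ?thesis by simp
  qed
  finally show ?thesis by simp
qed

lemma null_later: "Suc k \<le> K \<Longrightarrow> Re (F (hminus H (v k) (gP K (v k))) (hminus H (v k) (gP K (v k)))) = 0"
proof -
  assume K: "Suc k \<le> K"
  have "(\<Sum>j<Suc k. (cmod (F (v k) (gw j)))\<^sup>2) \<le> (\<Sum>j<K. (cmod (F (v k) (gw j)))\<^sup>2)"
    using K by (intro sum_mono2) auto
  then have "Re (F (hminus H (v k) (gP K (v k))) (hminus H (v k) (gP K (v k)))) \<le>
      Re (F (hminus H (v k) (gP (Suc k) (v k))) (hminus H (v k) (gP (Suc k) (v k))))"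
    unfolding pyth_re[OF v_in] by simp
  then show ?thesis using null_step[of k] F_pos[of "hminus H (v k) (gP K (v k))"] by simp
qed

lemma null_add: "a \<in> hcarrier H \<Longrightarrow> b \<in> hcarrier H \<Longrightarrow> Re (F a a) = 0 \<Longrightarrow> Re (F b b) = 0 \<Longrightarrow>
   Re (F (hplus H a b) (hplus H a b)) = 0"
  using F_null_l[of a b] F_null_l[of b a] F_null_l[of a a] F_null_l[of b b] by simp

lemma null_sc: "a \<in> hcarrier H \<Longrightarrow> Re (F a a) = 0 \<Longrightarrow> Re (F (hscale H c a) (hscale H c a)) = 0"
  using F_null_l[of a "hscale H c a"] by simp

lemma null_inv: "a \<in> hcarrier H \<Longrightarrow> n \<in> hcarrier H \<Longrightarrow> Re (F n n) = 0 \<Longrightarrow>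
   F (hplus H a n) (hplus H a n) = F a a"
  using F_null_l[of n a] F_null_r[of n a] F_null_l[of n n] by simp

lemma lincomb_null:
  assumes "m \<le> K"
  shows "Re (F (hminus H (vsum H (\<lambda>j. hscale H (lam j) (v j)) m) (gP K (vsum H (\<lambda>j. hscale H (lam j) (v j)) m)))
                (hminus H (vsum H (\<lambda>j. hscale H (lam j) (v j)) m) (gP K (vsum H (\<lambda>j. hscale H (lam j) (v j)) m)))) = 0"
  using assms
proof (induction m)
  case 0
  have "gP K (hzero H) = hzero H"
    by (rule ip_ext) (simp_all add: hip_proj)
  then show ?case by simp
next
  case (Suc m)
  define g where "g = vsum H (\<lambda>j. hscale H (lam j) (v j)) m"
  have g: "g \<in> hcarrier H" unfolding g_def by simp
  have eq: "hminus H (hplus H g (hscale H (lam m) (v m))) (gP K (hplus H g (hscale H (lam m) (v m))))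
      = hplus H (hminus H g (gP K g)) (hscale H (lam m) (hminus H (v m) (gP K (v m))))"
    using g by (intro ip_ext) (simp_all add: hip_proj algebra_simps sum.distrib sum_subtractf sum_distrib_left)
  have n1: "Re (F (hminus H g (gP K g)) (hminus H g (gP K g))) = 0" using Suc g_def by simp
  have n2: "Re (F (hminus H (v m) (gP K (v m))) (hminus H (v m) (gP K (v m)))) = 0"
    using null_later Suc by simp
  have gm: "hminus H g (gP K g) \<in> hcarrier H" and vm: "hminus H (v m) (gP K (v m)) \<in> hcarrier H"
    using g by simp_all
  show ?case unfolding vsum.simps g_def[symmetric] eq
    by (rule null_add[OF gm sc_in[OF vm] n1 null_sc[OF vm n2]])
qed

lemma best_approx:
  assumes x: "x \<in> hcarrier H" and y: "y \<in> hcarrier H"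
  shows "Re (F (hminus H x (gP K x)) (hminus H x (gP K x))) \<le> Re (F (hminus H x (gP K y)) (hminus H x (gP K y)))"
proof -
  define a where "a = hminus H x (gP K x)"
  define b where "b = gP K (hminus H x y)"
  have a: "a \<in> hcarrier H" and b: "b \<in> hcarrier H" unfolding a_def b_def using x y by simp_all
  have eq: "hminus H x (gP K y) = hplus H a b"
    unfolding a_def b_def using x y
    by (intro ip_ext) (simp_all add: hip_proj algebra_simps sum.distrib sum_subtractf)
  have ab: "F a b = 0" unfolding a_def b_def using x y by (intro perp_proj) simp_all
  have ba: "F b a = 0" using F_herm[OF a b] ab by simp
  have "F (hplus H a b) (hplus H a b) = F a a + F b b" using a b ab ba by simp
  then show ?thesis unfolding eq a_def[symmetric] using F_pos[OF b] by simp
qed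

lemma parseval_lim:
  assumes x: "x \<in> hcarrier H"
    and dens: "\<And>e. e > 0 \<Longrightarrow> \<exists>m lam. Re (F (hminus H x (vsum H (\<lambda>j. hscale H (lam j) (v j)) m))
                                   (hminus H x (vsum H (\<lambda>j. hscale H (lam j) (v j)) m))) < e"
  shows "(\<lambda>K. Re (F (hminus H x (gP K x)) (hminus H x (gP K x)))) \<longlonglongrightarrow> 0"
proof (rule LIMSEQ_I)
  fix e :: real assume e: "0 < e"
  obtain m lam where ml: "Re (F (hminus H x (vsum H (\<lambda>j. hscale H (lam j) (v j)) m))
                                   (hminus H x (vsum H (\<lambda>j. hscale H (lam j) (v j)) m))) < e"
    using dens[OF e] by blast
  define s where "s = vsum H (\<lambda>j. hscale H (lam j) (v j)) m"
  have s: "s \<in> hcarrier H" unfolding s_def by simp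
  show "\<exists>N. \<forall>K\<ge>N. norm (Re (F (hminus H x (gP K x)) (hminus H x (gP K x))) - 0) < e"
  proof (intro exI allI impI)
    fix K assume K: "m \<le> K"
    have n: "Re (F (hminus H s (gP K s)) (hminus H s (gP K s))) = 0"
      unfolding s_def by (rule lincomb_null[OF K])
    have eq: "hminus H x (gP K s) = hplus H (hminus H x s) (hminus H s (gP K s))"
      using x s by (intro ip_ext) simp_all
    have "Re (F (hminus H x (gP K x)) (hminus H x (gP K x))) \<le> Re (F (hminus H x (gP K s)) (hminus H x (gP K s)))"
      by (rule best_approx[OF x s])
    also have "\<dots> = Re (F (hminus H x s) (hminus H x s))"
    proof -
      have "F (hplus H (hminus H x s) (hminus H s (gP K s))) (hplus H (hminus H x s) (hminus H s (gP K s)))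
          = F (hminus H x s) (hminus H x s)"
        by (rule null_inv[OF _ _ n]) (simp_all add: x s)
      then show ?thesis unfolding eq by simp
    qed
    also have "\<dots> < e" using ml s_def by simp
    finally show "norm (Re (F (hminus H x (gP K x)) (hminus H x (gP K x))) - 0) < e"
      using F_pos[of "hminus H x (gP K x)"] x by simp
  qed
qed

end

lemma null_comp:
  fixes f :: "nat \<Rightarrow> 'b::real_normed_vector"
  assumes "\<And>n. norm (f n) \<le> g n" and "g \<longlonglongrightarrow> 0"
  shows "f \<longlonglongrightarrow> 0"
proof -
  have "(\<lambda>n. norm (f n)) \<longlonglongrightarrow> 0"
    by (rule tendsto_sandwich[of "\<lambda>_. 0" _ _ g]) (use assms in auto)
  then show ?thesis by (simp add: tendsto_norm_zero_iff)
qed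

context ips
begin

definition conv :: "(nat \<Rightarrow> 'a) \<Rightarrow> 'a \<Rightarrow> bool" where
  "conv X x \<longleftrightarrow> (\<lambda>n. hnorm H (hminus H (X n) x)) \<longlonglongrightarrow> 0"

lemma minus_swap: "a \<in> hcarrier H \<Longrightarrow> b \<in> hcarrier H \<Longrightarrow> hminus H a b = hscale H (-1) (hminus H b a)"
  by (rule ip_ext) simp_all

lemma nm_minus_sym: "a \<in> hcarrier H \<Longrightarrow> b \<in> hcarrier H \<Longrightarrow> hnorm H (hminus H a b) = hnorm H (hminus H b a)"
  by (subst minus_swap) (simp_all add: nm_sc)

lemma nm_tri_minus: "a \<in> hcarrier H \<Longrightarrow> b \<in> hcarrier H \<Longrightarrow> c \<in> hcarrier H \<Longrightarrow>
   hnorm H (hminus H a c) \<le> hnorm H (hminus H a b) + hnorm H (hminus H b c)"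
proof -
  assume a: "a \<in> hcarrier H" and b: "b \<in> hcarrier H" and c: "c \<in> hcarrier H"
  have "hminus H a c = hplus H (hminus H a b) (hminus H b c)" using a b c by (intro ip_ext) simp_all
  then show ?thesis using tri[of "hminus H a b" "hminus H b c"] a b c by simp
qed

lemma nm_le_minus: "a \<in> hcarrier H \<Longrightarrow> b \<in> hcarrier H \<Longrightarrow> hnorm H a \<le> hnorm H (hminus H a b) + hnorm H b"
proof -
  assume a: "a \<in> hcarrier H" and b: "b \<in> hcarrier H"
  have "a = hplus H (hminus H a b) b" using a b by (intro ip_ext) simp_all
  then have "hnorm H a = hnorm H (hplus H (hminus H a b) b)" by simp
  also have "\<dots> \<le> hnorm H (hminus H a b) + hnorm H b" using tri a b by simp
  finally show ?thesis .
qed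

lemma conv_unique:
  assumes X: "\<And>n. X n \<in> hcarrier H" and x: "x \<in> hcarrier H" and y: "y \<in> hcarrier H"
    and cx: "conv X x" and cy: "conv X y"
  shows "x = y"
proof -
  have lim: "(\<lambda>n. hnorm H (hminus H (X n) x) + hnorm H (hminus H (X n) y)) \<longlonglongrightarrow> 0"
    using cx cy unfolding conv_def by (rule tendsto_add_zero)
  have bnd: "hnorm H (hminus H x y) \<le> hnorm H (hminus H (X n) x) + hnorm H (hminus H (X n) y)" for n
    using nm_tri_minus[OF x X y] nm_minus_sym[OF x X] by simp
  have "hnorm H (hminus H x y) \<le> 0"
    by (rule LIMSEQ_le_const[OF lim]) (use bnd in blast)
  then have "hnorm H (hminus H x y) = 0" using x y by (simp add: order_antisym)
  then have "hminus H x y = hzero H" using nm_zero_iff[of "hminus H x y"] x y by simp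
  then show ?thesis by (rule minus_zero_eq[OF x y])
qed

lemma ip_cont:
  assumes X: "\<And>n. X n \<in> hcarrier H" and Y: "\<And>n. Y n \<in> hcarrier H"
    and x: "x \<in> hcarrier H" and y: "y \<in> hcarrier H"
    and cx: "conv X x" and cy: "conv Y y"
  shows "(\<lambda>n. hip H (X n) (Y n)) \<longlonglongrightarrow> hip H x y"
proof -
  define a where "a n = hnorm H (hminus H (X n) x)" for n
  define b where "b n = hnorm H (hminus H (Y n) y)" for n
  have a: "a \<longlonglongrightarrow> 0" and b: "b \<longlonglongrightarrow> 0" using cx cy unfolding conv_def a_def b_def by auto
  have bound: "norm (hip H (X n) (Y n) - hip H x y) \<le> a n * (b n + hnorm H y) + hnorm H x * b n" for n
  proof -
    have "hip H (X n) (Y n) - hip H x y = hip H (hminus H (X n) x) (Y n) + hip H x (hminus H (Y n) y)"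
      using X Y x y by simp
    then have "norm (hip H (X n) (Y n) - hip H x y) \<le> cmod (hip H (hminus H (X n) x) (Y n)) + cmod (hip H x (hminus H (Y n) y))"
      by (simp add: norm_triangle_ineq)
    also have "\<dots> \<le> a n * hnorm H (Y n) + hnorm H x * b n"
    proof (rule add_mono)
      show "cmod (hip H (hminus H (X n) x) (Y n)) \<le> a n * hnorm H (Y n)"
        unfolding a_def by (rule cs) (simp_all add: X Y x)
      show "cmod (hip H x (hminus H (Y n) y)) \<le> hnorm H x * b n"
        unfolding b_def by (rule cs) (simp_all add: Y x y)
    qed
    also have "hnorm H (Y n) \<le> b n + hnorm H y" unfolding b_def using nm_le_minus Y y by simp
    then have "a n * hnorm H (Y n) \<le> a n * (b n + hnorm H y)" unfolding a_def using X x
      by (intro mult_left_mono) simp_all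
    finally show ?thesis by simp
  qed
  have "(\<lambda>n. a n * (b n + hnorm H y) + hnorm H x * b n) \<longlonglongrightarrow> 0 * (0 + hnorm H y) + hnorm H x * 0"
    by (rule tendsto_add[OF tendsto_mult[OF a tendsto_add[OF b tendsto_const]] tendsto_mult[OF tendsto_const b]])
  then have lim0: "(\<lambda>n. a n * (b n + hnorm H y) + hnorm H x * b n) \<longlonglongrightarrow> 0" by simp
  have "(\<lambda>n. hip H (X n) (Y n) - hip H x y) \<longlonglongrightarrow> 0"
    by (rule null_comp[OF bound lim0])
  then show ?thesis by (simp add: LIM_zero_iff)
qed

end

context psform
begin

lemma orth_vsum:
  assumes g: "\<And>j. g j \<in> hcarrier H" and orth: "\<And>i j. i \<noteq> j \<Longrightarrow> F (g i) (g j) = 0"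
  shows "F (vsum H (\<lambda>j. hscale H (a j) (g j)) n) (vsum H (\<lambda>j. hscale H (b j) (g j)) n)
         = (\<Sum>j<n. a j * cnj (b j) * F (g j) (g j))"
proof (induction n)
  case 0 then show ?case by simp
next
  case (Suc n)
  define S where "S = vsum H (\<lambda>j. hscale H (a j) (g j)) n"
  define T where "T = vsum H (\<lambda>j. hscale H (b j) (g j)) n"
  have S: "S \<in> hcarrier H" and T: "T \<in> hcarrier H" unfolding S_def T_def using g by simp_all
  have z1: "F S (g n) = 0" unfolding S_def using g orth by (simp add: F_vsum_l)
  have z2: "F (g n) T = 0" unfolding T_def using g orth by (simp add: F_vsum_r)
  have "F (hplus H S (hscale H (a n) (g n))) (hplus H T (hscale H (b n) (g n)))
      = F S T + cnj (b n) * F S (g n) + (a n * F (g n) T + a n * (cnj (b n) * F (g n) (g n)))"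
    using S T g by (simp add: distrib_left)
  also have "\<dots> = F S T + a n * cnj (b n) * F (g n) (g n)" unfolding z1 z2 by (simp add: mult.assoc)
  finally have e: "F (hplus H S (hscale H (a n) (g n))) (hplus H T (hscale H (b n) (g n)))
      = F S T + a n * cnj (b n) * F (g n) (g n)" .
  have "F (vsum H (\<lambda>j. hscale H (a j) (g j)) (Suc n)) (vsum H (\<lambda>j. hscale H (b j) (g j)) (Suc n))
      = F (hplus H S (hscale H (a n) (g n))) (hplus H T (hscale H (b n) (g n)))"
    unfolding S_def T_def by (simp only: vsum.simps)
  also have "\<dots> = F S T + a n * cnj (b n) * F (g n) (g n)" by (rule e)
  also have "F S T = (\<Sum>j<n. a j * cnj (b j) * F (g j) (g j))" unfolding S_def T_def by (rule Suc.IH)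
  finally show ?case by simp
qed

end

context ips
begin

lemma bo_in: "bounded_op H A \<Longrightarrow> x \<in> hcarrier H \<Longrightarrow> A x \<in> hcarrier H"
  unfolding bounded_op_def by blast
lemma bo_add: "bounded_op H A \<Longrightarrow> x \<in> hcarrier H \<Longrightarrow> y \<in> hcarrier H \<Longrightarrow> A (hplus H x y) = hplus H (A x) (A y)"
  unfolding bounded_op_def by blast
lemma bo_sc: "bounded_op H A \<Longrightarrow> x \<in> hcarrier H \<Longrightarrow> A (hscale H a x) = hscale H a (A x)"
  unfolding bounded_op_def by blast
lemma bo_minus: "bounded_op H A \<Longrightarrow> x \<in> hcarrier H \<Longrightarrow> y \<in> hcarrier H \<Longrightarrow> A (hminus H x y) = hminus H (A x) (A y)"
  unfolding hminus_def by (simp add: bo_add bo_sc)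
lemma bo_zero: "bounded_op H A \<Longrightarrow> A (hzero H) = hzero H"
proof -
  assume A: "bounded_op H A"
  have "A (hscale H 0 (hzero H)) = hscale H 0 (A (hzero H))" by (rule bo_sc[OF A]) simp
  moreover have "hscale H 0 y = hzero H" if "y \<in> hcarrier H" for y
    using that by (intro ip_ext) simp_all
  ultimately show ?thesis using A bo_in[OF A zero_in] by simp
qed

lemma bo_K: "bounded_op H A \<Longrightarrow> \<exists>K\<ge>0. \<forall>x\<in>hcarrier H. hnorm H (A x) \<le> K * hnorm H x"
proof -
  assume A: "bounded_op H A"
  then obtain K where K: "\<forall>x\<in>hcarrier H. hnorm H (A x) \<le> K * hnorm H x" unfolding bounded_op_def by blast
  have "\<forall>x\<in>hcarrier H. hnorm H (A x) \<le> \<bar>K\<bar> * hnorm H x"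
  proof
    fix x assume x: "x \<in> hcarrier H"
    have "K * hnorm H x \<le> \<bar>K\<bar> * hnorm H x" using x by (intro mult_right_mono) simp_all
    moreover have "hnorm H (A x) \<le> K * hnorm H x" using K x by blast
    ultimately show "hnorm H (A x) \<le> \<bar>K\<bar> * hnorm H x" by linarith
  qed
  then show ?thesis by (intro exI[of _ "\<bar>K\<bar>"]) simp
qed

lemma bo_comp: "bounded_op H A \<Longrightarrow> bounded_op H B \<Longrightarrow> bounded_op H (A \<circ> B)"
proof -
  assume A: "bounded_op H A" and B: "bounded_op H B"
  obtain KA where KA: "KA \<ge> 0" "\<forall>x\<in>hcarrier H. hnorm H (A x) \<le> KA * hnorm H x" using bo_K[OF A] by blast
  obtain KB where KB: "KB \<ge> 0" "\<forall>x\<in>hcarrier H. hnorm H (B x) \<le> KB * hnorm H x" using bo_K[OF B] by blast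
  have "\<forall>x\<in>hcarrier H. hnorm H ((A \<circ> B) x) \<le> (KA * KB) * hnorm H x"
  proof
    fix x assume x: "x \<in> hcarrier H"
    have "hnorm H (A (B x)) \<le> KA * hnorm H (B x)" using KA bo_in[OF B x] by simp
    also have "\<dots> \<le> KA * (KB * hnorm H x)" using KA KB x by (intro mult_left_mono) auto
    finally show "hnorm H ((A \<circ> B) x) \<le> (KA * KB) * hnorm H x" by (simp add: mult.assoc)
  qed
  moreover have "\<forall>x\<in>hcarrier H. (A \<circ> B) x \<in> hcarrier H" using bo_in[OF A] bo_in[OF B] by simp
  moreover have "\<forall>x\<in>hcarrier H. \<forall>y\<in>hcarrier H. (A \<circ> B) (hplus H x y) = hplus H ((A \<circ> B) x) ((A \<circ> B) y)"
    using A B bo_in[OF B] by (simp add: bo_add)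
  moreover have "\<forall>a. \<forall>x\<in>hcarrier H. (A \<circ> B) (hscale H a x) = hscale H a ((A \<circ> B) x)"
    using A B bo_in[OF B] by (simp add: bo_sc)
  ultimately show ?thesis unfolding bounded_op_def by blast
qed

lemma bo_id: "bounded_op H id"
  unfolding bounded_op_def by (auto intro!: exI[of _ 1])

lemma bo_pow: "bounded_op H A \<Longrightarrow> bounded_op H (A ^^ n)"
  by (induction n) (simp_all add: bo_id bo_comp)

lemma opnorm_bound:
  assumes A: "bounded_op H A" and x: "x \<in> hcarrier H"
  shows "hnorm H (A x) \<le> opnorm H A * hnorm H x"
proof -
  obtain K where K: "K \<ge> 0" "\<forall>x\<in>hcarrier H. hnorm H (A x) \<le> K * hnorm H x" using bo_K[OF A] by blast
  define S where "S = {hnorm H (A x) | x. x \<in> hcarrier H \<and> hnorm H x \<le> 1}"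
  have bdd: "bdd_above S"
  proof (rule bdd_aboveI)
    fix s assume "s \<in> S"
    then obtain y where y: "y \<in> hcarrier H" "hnorm H y \<le> 1" "s = hnorm H (A y)" unfolding S_def by blast
    have "hnorm H (A y) \<le> K * hnorm H y" using K y by simp
    also have "\<dots> \<le> K * 1" using K y by (intro mult_left_mono) auto
    finally show "s \<le> K" using y by simp
  qed
  have upper: "hnorm H (A y) \<le> opnorm H A" if "y \<in> hcarrier H" "hnorm H y \<le> 1" for y
    unfolding opnorm_def S_def[symmetric] using that bdd by (intro cSup_upper) (auto simp: S_def)
  show ?thesis
  proof (cases "x = hzero H")
    case True
    have "0 \<le> opnorm H A" using upper[of "hzero H"] bo_zero[OF A] by simp
    then show ?thesis using True bo_zero[OF A] by simp
  next
    case False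
    define r where "r = hnorm H x"
    have r: "0 < r" using False x nm_zero_iff nm_nonneg unfolding r_def by (metis less_eq_real_def)
    define y where "y = hscale H (complex_of_real (1 / r)) x"
    have y: "y \<in> hcarrier H" unfolding y_def using x by simp
    have ny: "hnorm H y = 1" unfolding y_def using x r by (simp add: nm_sc r_def norm_divide)
    have "hnorm H (A y) = hnorm H (A x) / r" unfolding y_def using A x r bo_in[OF A x] by (simp add: bo_sc nm_sc norm_divide)
    then have "hnorm H (A x) / r \<le> opnorm H A" using upper[OF y] ny by simp
    then show ?thesis using r unfolding r_def by (simp add: pos_divide_le_eq mult.commute)
  qed
qed

lemma funpow_apply: "(A ^^ j) ((A ^^ n) x) = (A ^^ (j + n)) x"
  by (simp add: funpow_add)

end

definition acoef :: "real \<Rightarrow> nat \<Rightarrow> real" where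
  "acoef \<alpha> n = real (Suc n) powr (-\<alpha>)"

function bcoef :: "real \<Rightarrow> nat \<Rightarrow> real" where
  "bcoef \<alpha> m = (if m = 0 then 0 else acoef \<alpha> m - (\<Sum>n\<in>{1..<m}. acoef \<alpha> n * bcoef \<alpha> (m - n)))"
  by pat_completeness auto
termination by (relation "measure snd") auto

declare bcoef.simps[simp del]

definition ccoef :: "real \<Rightarrow> nat \<Rightarrow> real" where
  "ccoef \<alpha> j = (if j = 0 then 1 else - bcoef \<alpha> j)"

lemma acoef_pos: "0 < acoef \<alpha> n"
  unfolding acoef_def by simp

lemma acoef_0[simp]: "acoef \<alpha> 0 = 1"
  unfolding acoef_def by simp

lemma bcoef_0[simp]: "bcoef \<alpha> 0 = 0"
  by (simp add: bcoef.simps)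

lemma b_rec:
  assumes "1 \<le> m"
  shows "(\<Sum>n<m. acoef \<alpha> n * bcoef \<alpha> (m - n)) = acoef \<alpha> m"
proof -
  have "{..<m} = insert 0 {1..<m}" using assms by auto
  then have "(\<Sum>n<m. acoef \<alpha> n * bcoef \<alpha> (m - n)) =
      bcoef \<alpha> m + (\<Sum>n\<in>{1..<m}. acoef \<alpha> n * bcoef \<alpha> (m - n))"
    by simp
  also have "bcoef \<alpha> m = acoef \<alpha> m - (\<Sum>n\<in>{1..<m}. acoef \<alpha> n * bcoef \<alpha> (m - n))"
    using assms by (subst bcoef.simps) simp
  finally show ?thesis by simp
qed

lemma a_ratio:
  assumes a: "0 \<le> \<alpha>" and n: "1 \<le> n" "n \<le> m + 1"
  shows "acoef \<alpha> n * acoef \<alpha> m \<le> acoef \<alpha> (m + 1) * acoef \<alpha> (n - 1)"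
proof -
  have "real (Suc (m+1)) * real (Suc (n - 1)) \<le> real (Suc n) * real (Suc m)"
  proof -
    have "Suc (m+1) * Suc (n-1) \<le> Suc n * Suc m" using n
      by (cases n) (auto simp: algebra_simps)
    then show ?thesis by (metis of_nat_le_iff of_nat_mult)
  qed
  then have "(real (Suc n) * real (Suc m)) powr (-\<alpha>) \<le> (real (Suc (m+1)) * real (Suc (n - 1))) powr (-\<alpha>)"
    using a by (intro powr_mono2') auto
  then show ?thesis unfolding acoef_def by (simp add: powr_mult)
qed

lemma bcoef_nonneg:
  assumes a: "0 \<le> \<alpha>"
  shows "0 \<le> bcoef \<alpha> m"
proof (induction m rule: less_induct)
  case (less m)
  show ?case
  proof (cases m)
    case 0 then show ?thesis by simp
  next
    case (Suc k)
    have IH: "\<And>j. j < Suc k \<Longrightarrow> 0 \<le> bcoef \<alpha> j" using less Suc by auto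
    have ak: "0 < acoef \<alpha> k" by (rule acoef_pos)
    have "(\<Sum>n\<in>{1..<Suc k}. acoef \<alpha> n * bcoef \<alpha> (Suc k - n)) * acoef \<alpha> k
        = (\<Sum>n\<in>{1..<Suc k}. (acoef \<alpha> n * acoef \<alpha> k) * bcoef \<alpha> (Suc k - n))"
      unfolding sum_distrib_right by (simp add: mult_ac)
    also have "\<dots> \<le> (\<Sum>n\<in>{1..<Suc k}. (acoef \<alpha> (k + 1) * acoef \<alpha> (n - 1)) * bcoef \<alpha> (Suc k - n))"
    proof (rule sum_mono)
      fix n assume n: "n \<in> {1..<Suc k}"
      have "0 \<le> bcoef \<alpha> (Suc k - n)" using IH n by auto
      moreover have "acoef \<alpha> n * acoef \<alpha> k \<le> acoef \<alpha> (k + 1) * acoef \<alpha> (n - 1)"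
        using a_ratio[OF a, of n k] n by auto
      ultimately show "acoef \<alpha> n * acoef \<alpha> k * bcoef \<alpha> (Suc k - n)
          \<le> acoef \<alpha> (k + 1) * acoef \<alpha> (n - 1) * bcoef \<alpha> (Suc k - n)"
        by (rule mult_right_mono[rotated])
    qed
    also have "\<dots> = acoef \<alpha> (k + 1) * (\<Sum>n\<in>{1..<Suc k}. acoef \<alpha> (n - 1) * bcoef \<alpha> (Suc k - n))"
      unfolding sum_distrib_left by (simp add: mult_ac)
    also have "(\<Sum>n\<in>{1..<Suc k}. acoef \<alpha> (n - 1) * bcoef \<alpha> (Suc k - n))
        = (\<Sum>n<k. acoef \<alpha> n * bcoef \<alpha> (k - n))"
    proof -
      have "(\<Sum>n\<in>{Suc 0..<Suc k}. acoef \<alpha> (n - 1) * bcoef \<alpha> (Suc k - n))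
          = (\<Sum>n\<in>{0..<k}. acoef \<alpha> (Suc n - 1) * bcoef \<alpha> (Suc k - Suc n))"
        by (rule sum.shift_bounds_Suc_ivl)
      then show ?thesis by (simp add: atLeast0LessThan)
    qed
    also have "acoef \<alpha> (k + 1) * (\<Sum>n<k. acoef \<alpha> n * bcoef \<alpha> (k - n)) \<le> acoef \<alpha> (k + 1) * acoef \<alpha> k"
    proof (cases "k = 0")
      case True then show ?thesis using acoef_pos[of \<alpha>] by (simp add: less_imp_le)
    next
      case False then show ?thesis using b_rec[of k \<alpha>] by simp
    qed
    finally have "(\<Sum>n\<in>{1..<Suc k}. acoef \<alpha> n * bcoef \<alpha> (Suc k - n)) \<le> acoef \<alpha> (k + 1)"
      using ak by (simp add: mult.commute[of _ "acoef \<alpha> k"])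
    then show ?thesis unfolding Suc by (subst bcoef.simps) simp
  qed
qed

lemma bcoef_le:
  assumes a: "0 \<le> \<alpha>" and m: "1 \<le> m"
  shows "bcoef \<alpha> m \<le> acoef \<alpha> m"
proof -
  have "(\<Sum>n\<in>{1..<m}. acoef \<alpha> n * bcoef \<alpha> (m - n)) \<ge> 0"
    using bcoef_nonneg[OF a] acoef_pos by (intro sum_nonneg) (simp add: less_imp_le)
  then show ?thesis using m by (subst bcoef.simps) simp
qed

lemma conv_zero:
  assumes "1 \<le> m"
  shows "(\<Sum>n\<le>m. acoef \<alpha> n * ccoef \<alpha> (m - n)) = 0"
proof -
  have "(\<Sum>n\<le>m. acoef \<alpha> n * ccoef \<alpha> (m - n)) = acoef \<alpha> m + (\<Sum>n<m. acoef \<alpha> n * ccoef \<alpha> (m - n))"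
    by (simp add: lessThan_Suc_atMost[symmetric] ccoef_def)
  also have "(\<Sum>n<m. acoef \<alpha> n * ccoef \<alpha> (m - n)) = - (\<Sum>n<m. acoef \<alpha> n * bcoef \<alpha> (m - n))"
    by (simp add: ccoef_def sum_negf[symmetric])
  finally show ?thesis using b_rec[OF assms] by simp
qed

lemma conv_partial:
  assumes a: "0 \<le> \<alpha>" and N: "N \<le> m"
  shows "0 \<le> - (\<Sum>n<N. acoef \<alpha> n * ccoef \<alpha> (m - n))"
    and "- (\<Sum>n<N. acoef \<alpha> n * ccoef \<alpha> (m - n)) \<le> acoef \<alpha> m"
proof -
  have eq: "- (\<Sum>n<N. acoef \<alpha> n * ccoef \<alpha> (m - n)) = (\<Sum>n<N. acoef \<alpha> n * bcoef \<alpha> (m - n))"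
    using N by (simp add: ccoef_def sum_negf[symmetric])
  show "0 \<le> - (\<Sum>n<N. acoef \<alpha> n * ccoef \<alpha> (m - n))"
    unfolding eq using bcoef_nonneg[OF a] acoef_pos by (intro sum_nonneg) (simp add: less_imp_le)
  show "- (\<Sum>n<N. acoef \<alpha> n * ccoef \<alpha> (m - n)) \<le> acoef \<alpha> m"
  proof (cases "m = 0")
    case True then show ?thesis using N acoef_pos[of \<alpha> 0] by simp
  next
    case False
    have "(\<Sum>n<N. acoef \<alpha> n * bcoef \<alpha> (m - n)) \<le> (\<Sum>n<m. acoef \<alpha> n * bcoef \<alpha> (m - n))"
      using N bcoef_nonneg[OF a] acoef_pos
      by (intro sum_mono2) (auto simp: less_imp_le)
    then show ?thesis unfolding eq using b_rec[of m \<alpha>] False by simp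
  qed
qed

locale setting =
  fixes \<alpha> :: real and H :: "'a chs" and T :: "'a \<Rightarrow> 'a"
  assumes a0: "0 < \<alpha>" and a1: "\<alpha> \<le> 1" and hs: "hilbert_space H" and sep: "separable H"
    and bT: "bounded_op H T"
    and summ: "summable (\<lambda>s. (opnorm H (T ^^ Suc s))\<^sup>2 / real (Suc s + 1) powr \<alpha>)"
    and sle: "(\<Sum>s. (opnorm H (T ^^ Suc s))\<^sup>2 / real (Suc s + 1) powr \<alpha>) \<le> 1"
begin

sublocale ips H using hs unfolding hilbert_space_def by (simp add: ips_def)

lemma bTn: "bounded_op H (T ^^ n)" by (rule bo_pow[OF bT])
lemma Tn_in[simp]: "x \<in> hcarrier H \<Longrightarrow> (T ^^ n) x \<in> hcarrier H" using bo_in[OF bTn] .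
lemma Tn_add[simp]: "x \<in> hcarrier H \<Longrightarrow> y \<in> hcarrier H \<Longrightarrow> (T ^^ n) (hplus H x y) = hplus H ((T ^^ n) x) ((T ^^ n) y)"
  using bo_add[OF bTn] .
lemma Tn_sc[simp]: "x \<in> hcarrier H \<Longrightarrow> (T ^^ n) (hscale H a x) = hscale H a ((T ^^ n) x)"
  using bo_sc[OF bTn] .
lemma Tn_minus[simp]: "x \<in> hcarrier H \<Longrightarrow> y \<in> hcarrier H \<Longrightarrow> (T ^^ n) (hminus H x y) = hminus H ((T ^^ n) x) ((T ^^ n) y)"
  using bo_minus[OF bTn] .
lemma Tn_zero[simp]: "(T ^^ n) (hzero H) = hzero H"
  using bo_zero[OF bTn] .
lemma T_in[simp]: "x \<in> hcarrier H \<Longrightarrow> T x \<in> hcarrier H" using bo_in[OF bT] .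
lemma Tn_T: "(T ^^ j) ((T ^^ n) x) = (T ^^ (j + n)) x" by (simp add: funpow_add)

definition tn :: "nat \<Rightarrow> real" where "tn n = opnorm H (T ^^ n)"

lemma Tn_bound: "x \<in> hcarrier H \<Longrightarrow> hnorm H ((T ^^ n) x) \<le> tn n * hnorm H x"
  unfolding tn_def using opnorm_bound[OF bTn] .

lemma a_shift: "acoef \<alpha> (Suc s) * (tn (Suc s))\<^sup>2 = (opnorm H (T ^^ Suc s))\<^sup>2 / real (Suc s + 1) powr \<alpha>"
  unfolding acoef_def tn_def by (simp add: powr_minus_divide)

lemma summ_a: "summable (\<lambda>j. acoef \<alpha> j * (tn j)\<^sup>2)"
proof -
  have "summable (\<lambda>s. acoef \<alpha> (Suc s) * (tn (Suc s))\<^sup>2)" using summ by (simp only: a_shift)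
  then show ?thesis using summable_Suc_iff[of "\<lambda>j. acoef \<alpha> j * (tn j)\<^sup>2"] by simp
qed

lemma sle_a: "(\<Sum>s. acoef \<alpha> (Suc s) * (tn (Suc s))\<^sup>2) \<le> 1"
  using sle by (simp only: a_shift)

lemma summ_a_shift: "summable (\<lambda>s. acoef \<alpha> (Suc s) * (tn (Suc s))\<^sup>2)"
  using summ_a summable_Suc_iff[of "\<lambda>j. acoef \<alpha> j * (tn j)\<^sup>2"] by simp

lemma c_abs: "\<bar>ccoef \<alpha> j\<bar> \<le> acoef \<alpha> j"
proof (cases "j = 0")
  case True then show ?thesis by (simp add: ccoef_def)
next
  case False
  then show ?thesis using bcoef_nonneg[of \<alpha> j] bcoef_le[of \<alpha> j] a0 by (simp add: ccoef_def)
qed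

lemma c_le0: "1 \<le> j \<Longrightarrow> ccoef \<alpha> j \<le> 0"
  using bcoef_nonneg[of \<alpha> j] a0 by (simp add: ccoef_def)

lemma ip_Tn_bound:
  assumes x: "x \<in> hcarrier H" and y: "y \<in> hcarrier H"
  shows "cmod (hip H ((T ^^ j) x) ((T ^^ j) y)) \<le> (tn j)\<^sup>2 * (hnorm H x * hnorm H y)"
proof -
  have "cmod (hip H ((T ^^ j) x) ((T ^^ j) y)) \<le> hnorm H ((T ^^ j) x) * hnorm H ((T ^^ j) y)"
    using cs x y by simp
  also have "\<dots> \<le> (tn j * hnorm H x) * (tn j * hnorm H y)"
  proof (rule mult_mono)
    show "hnorm H ((T ^^ j) x) \<le> tn j * hnorm H x" using Tn_bound x by simp
    show "hnorm H ((T ^^ j) y) \<le> tn j * hnorm H y" using Tn_bound y by simp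
    show "0 \<le> tn j * hnorm H x" using Tn_bound[OF x, of j] nm_nonneg[OF Tn_in[OF x, of j]] by linarith
    show "0 \<le> hnorm H ((T ^^ j) y)" using y by simp
  qed
  finally show ?thesis by (simp add: power2_eq_square mult_ac)
qed

definition Qf :: "'a \<Rightarrow> 'a \<Rightarrow> complex" where
  "Qf x y = (\<Sum>j. complex_of_real (ccoef \<alpha> j) * hip H ((T ^^ j) x) ((T ^^ j) y))"

lemma Q_term_bound:
  assumes x: "x \<in> hcarrier H" and y: "y \<in> hcarrier H"
  shows "cmod (complex_of_real (ccoef \<alpha> j) * hip H ((T ^^ j) x) ((T ^^ j) y))
          \<le> acoef \<alpha> j * (tn j)\<^sup>2 * (hnorm H x * hnorm H y)"
proof -
  have "cmod (complex_of_real (ccoef \<alpha> j) * hip H ((T ^^ j) x) ((T ^^ j) y))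
      = \<bar>ccoef \<alpha> j\<bar> * cmod (hip H ((T ^^ j) x) ((T ^^ j) y))" by (simp add: norm_mult)
  also have "\<dots> \<le> acoef \<alpha> j * ((tn j)\<^sup>2 * (hnorm H x * hnorm H y))"
    using c_abs ip_Tn_bound[OF x y] acoef_pos[of \<alpha> j] by (intro mult_mono) auto
  finally show ?thesis by (simp add: mult.assoc)
qed

lemma Q_summable:
  assumes x: "x \<in> hcarrier H" and y: "y \<in> hcarrier H"
  shows "summable (\<lambda>j. complex_of_real (ccoef \<alpha> j) * hip H ((T ^^ j) x) ((T ^^ j) y))"
proof (rule summable_comparison_test')
  show "summable (\<lambda>j. acoef \<alpha> j * (tn j)\<^sup>2 * (hnorm H x * hnorm H y))"
    by (rule summable_mult2[OF summ_a])
  show "norm (complex_of_real (ccoef \<alpha> j) * hip H ((T ^^ j) x) ((T ^^ j) y))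
          \<le> acoef \<alpha> j * (tn j)\<^sup>2 * (hnorm H x * hnorm H y)" for j
    using Q_term_bound[OF x y] by simp
qed

lemma Q_sums: "x \<in> hcarrier H \<Longrightarrow> y \<in> hcarrier H \<Longrightarrow>
   (\<lambda>j. complex_of_real (ccoef \<alpha> j) * hip H ((T ^^ j) x) ((T ^^ j) y)) sums Qf x y"
  unfolding Qf_def by (rule summable_sums[OF Q_summable])

lemma r_summable:
  assumes x: "x \<in> hcarrier H"
  shows "summable (\<lambda>j. ccoef \<alpha> j * (hnorm H ((T ^^ j) x))\<^sup>2)"
proof (rule summable_comparison_test')
  show "summable (\<lambda>j. acoef \<alpha> j * (tn j)\<^sup>2 * (hnorm H x * hnorm H x))"
    by (rule summable_mult2[OF summ_a])
  fix j
  have "norm (ccoef \<alpha> j * (hnorm H ((T ^^ j) x))\<^sup>2) = cmod (complex_of_real (ccoef \<alpha> j) * hip H ((T ^^ j) x) ((T ^^ j) x))"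
    using x by (simp add: ip_self norm_mult norm_power abs_mult)
  also have "\<dots> \<le> acoef \<alpha> j * (tn j)\<^sup>2 * (hnorm H x * hnorm H x)" by (rule Q_term_bound[OF x x])
  finally show "norm (ccoef \<alpha> j * (hnorm H ((T ^^ j) x))\<^sup>2) \<le> acoef \<alpha> j * (tn j)\<^sup>2 * (hnorm H x * hnorm H x)" .
qed

lemma Q_self:
  assumes x: "x \<in> hcarrier H"
  shows "Qf x x = complex_of_real (\<Sum>j. ccoef \<alpha> j * (hnorm H ((T ^^ j) x))\<^sup>2)"
proof -
  have s0: "(\<lambda>j. complex_of_real (ccoef \<alpha> j * (hnorm H ((T ^^ j) x))\<^sup>2)) sums
        complex_of_real (\<Sum>j. ccoef \<alpha> j * (hnorm H ((T ^^ j) x))\<^sup>2)"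
    by (subst sums_of_real_iff) (rule summable_sums[OF r_summable[OF x]])
  have e: "(\<lambda>j. complex_of_real (ccoef \<alpha> j * (hnorm H ((T ^^ j) x))\<^sup>2))
      = (\<lambda>j. complex_of_real (ccoef \<alpha> j) * hip H ((T ^^ j) x) ((T ^^ j) x))"
    using x by (simp add: ip_self)
  have s1: "(\<lambda>j. complex_of_real (ccoef \<alpha> j) * hip H ((T ^^ j) x) ((T ^^ j) x)) sums
        complex_of_real (\<Sum>j. ccoef \<alpha> j * (hnorm H ((T ^^ j) x))\<^sup>2)"
    using s0 unfolding e .
  show ?thesis by (rule sums_unique2[OF Q_sums[OF x x] s1])
qed

lemma Q_re_bounds:
  assumes x: "x \<in> hcarrier H"
  shows "0 \<le> Re (Qf x x)" and "Re (Qf x x) \<le> (hnorm H x)\<^sup>2"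
proof -
  define r where "r j = ccoef \<alpha> j * (hnorm H ((T ^^ j) x))\<^sup>2" for j
  have rs: "summable r" unfolding r_def by (rule r_summable[OF x])
  have re: "Re (Qf x x) = suminf r" unfolding r_def using Q_self[OF x] by simp
  have rs1: "summable (\<lambda>s. r (Suc s))" using rs summable_Suc_iff[of r] by simp
  have split: "suminf r = r 0 + (\<Sum>s. r (Suc s))" using suminf_split_head[OF rs] by simp
  have r0: "r 0 = (hnorm H x)\<^sup>2" unfolding r_def by (simp add: ccoef_def)
  have up: "r (Suc s) \<le> 0" for s unfolding r_def using c_le0[of "Suc s"] by (simp add: mult_nonpos_nonneg)
  have lo: "- (acoef \<alpha> (Suc s) * (tn (Suc s))\<^sup>2 * (hnorm H x)\<^sup>2) \<le> r (Suc s)" for s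
  proof -
    have "\<bar>r (Suc s)\<bar> \<le> acoef \<alpha> (Suc s) * (tn (Suc s))\<^sup>2 * (hnorm H x * hnorm H x)"
    proof -
      have "\<bar>r (Suc s)\<bar> = cmod (complex_of_real (ccoef \<alpha> (Suc s)) * hip H ((T ^^ Suc s) x) ((T ^^ Suc s) x))"
        unfolding r_def using x by (simp add: ip_self norm_mult norm_power abs_mult)
      also have "\<dots> \<le> acoef \<alpha> (Suc s) * (tn (Suc s))\<^sup>2 * (hnorm H x * hnorm H x)" by (rule Q_term_bound[OF x x])
      finally show ?thesis .
    qed
    then show ?thesis by (simp add: power2_eq_square)
  qed
  have "(\<Sum>s. r (Suc s)) \<le> (\<Sum>s. 0)" by (rule suminf_le[OF up rs1 summable_zero])
  then have "(\<Sum>s. r (Suc s)) \<le> 0" by simp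
  then show "Re (Qf x x) \<le> (hnorm H x)\<^sup>2" using re split r0 by simp
  have s2: "summable (\<lambda>s. - (acoef \<alpha> (Suc s) * (tn (Suc s))\<^sup>2 * (hnorm H x)\<^sup>2))"
    by (intro summable_minus summable_mult2 summ_a_shift)
  have "(\<Sum>s. - (acoef \<alpha> (Suc s) * (tn (Suc s))\<^sup>2 * (hnorm H x)\<^sup>2)) \<le> (\<Sum>s. r (Suc s))"
    by (rule suminf_le[OF lo s2 rs1])
  moreover have "(\<Sum>s. - (acoef \<alpha> (Suc s) * (tn (Suc s))\<^sup>2 * (hnorm H x)\<^sup>2))
      = - ((\<Sum>s. acoef \<alpha> (Suc s) * (tn (Suc s))\<^sup>2) * (hnorm H x)\<^sup>2)"
    by (simp add: suminf_minus summable_mult2 summ_a_shift suminf_mult2[symmetric])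
  moreover have "(\<Sum>s. acoef \<alpha> (Suc s) * (tn (Suc s))\<^sup>2) * (hnorm H x)\<^sup>2 \<le> 1 * (hnorm H x)\<^sup>2"
    using sle_a by (intro mult_right_mono) simp_all
  ultimately show "0 \<le> Re (Qf x x)" using re split r0 by simp
qed

lemma Q_psform: "psform H Qf"
proof unfold_locales
  fix x y z assume x: "x \<in> hcarrier H" and y: "y \<in> hcarrier H" and z: "z \<in> hcarrier H"
  have "Qf (hplus H x y) z = (\<Sum>j. complex_of_real (ccoef \<alpha> j) * hip H ((T ^^ j) x) ((T ^^ j) z)
                                 + complex_of_real (ccoef \<alpha> j) * hip H ((T ^^ j) y) ((T ^^ j) z))"
    unfolding Qf_def using x y z by (simp add: distrib_left)
  also have "\<dots> = Qf x z + Qf y z"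
    unfolding Qf_def by (rule suminf_add[symmetric, OF Q_summable[OF x z] Q_summable[OF y z]])
  finally show "Qf (hplus H x y) z = Qf x z + Qf y z" .
next
  fix a x y assume x: "x \<in> hcarrier H" and y: "y \<in> hcarrier H"
  have "Qf (hscale H a x) y = (\<Sum>j. a * (complex_of_real (ccoef \<alpha> j) * hip H ((T ^^ j) x) ((T ^^ j) y)))"
    unfolding Qf_def using x y by (simp add: mult_ac)
  also have "\<dots> = a * Qf x y" unfolding Qf_def by (rule suminf_mult[OF Q_summable[OF x y]])
  finally show "Qf (hscale H a x) y = a * Qf x y" .
next
  fix x y assume x: "x \<in> hcarrier H" and y: "y \<in> hcarrier H"
  have "(\<lambda>j. cnj (complex_of_real (ccoef \<alpha> j) * hip H ((T ^^ j) x) ((T ^^ j) y))) sums cnj (Qf x y)"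
    using Q_sums[OF x y] by (simp only: sums_cnj)
  moreover have e: "(\<lambda>j. cnj (complex_of_real (ccoef \<alpha> j) * hip H ((T ^^ j) x) ((T ^^ j) y)))
      = (\<lambda>j. complex_of_real (ccoef \<alpha> j) * hip H ((T ^^ j) y) ((T ^^ j) x))"
  proof
    fix j show "cnj (complex_of_real (ccoef \<alpha> j) * hip H ((T ^^ j) x) ((T ^^ j) y))
      = complex_of_real (ccoef \<alpha> j) * hip H ((T ^^ j) y) ((T ^^ j) x)"
      using ip_conj[of "(T ^^ j) x" "(T ^^ j) y"] x y by simp
  qed
  ultimately have "(\<lambda>j. complex_of_real (ccoef \<alpha> j) * hip H ((T ^^ j) y) ((T ^^ j) x)) sums cnj (Qf x y)"
    by simp
  then show "Qf y x = cnj (Qf x y)" by (rule sums_unique2[OF Q_sums[OF y x]])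
next
  fix x assume x: "x \<in> hcarrier H"
  show "Im (Qf x x) = 0 \<and> 0 \<le> Re (Qf x x)" using Q_self[OF x] Q_re_bounds(1)[OF x] by simp
qed

end

context setting begin

lemma key_identity:
  assumes x: "x \<in> hcarrier H" and y: "y \<in> hcarrier H"
  shows "(\<lambda>n. complex_of_real (acoef \<alpha> n) * Qf ((T ^^ n) x) ((T ^^ n) y)) sums hip H x y"
proof -
  define g where "g m = hip H ((T ^^ m) x) ((T ^^ m) y)" for m
  define K where "K = hnorm H x * hnorm H y"
  have K0: "0 \<le> K" unfolding K_def using x y by simp
  define h where "h m = acoef \<alpha> m * ((tn m)\<^sup>2 * K)" for m
  have hs: "summable h" unfolding h_def using summable_mult2[OF summ_a, of K] by (simp add: mult.assoc)
  have gb: "cmod (g m) \<le> (tn m)\<^sup>2 * K" for m unfolding g_def K_def by (rule ip_Tn_bound[OF x y])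
  define f where "f n m = (if n \<le> m then complex_of_real (ccoef \<alpha> (m - n)) * g m else 0)" for n m
  have fs: "f n sums Qf ((T ^^ n) x) ((T ^^ n) y)" for n
  proof -
    have e: "(\<lambda>j. f n (j + n)) = (\<lambda>j. complex_of_real (ccoef \<alpha> j) * hip H ((T ^^ j) ((T ^^ n) x)) ((T ^^ j) ((T ^^ n) y)))"
      unfolding f_def g_def by (simp add: Tn_T)
    have "(\<lambda>j. f n (j + n)) sums Qf ((T ^^ n) x) ((T ^^ n) y)"
      unfolding e using Q_sums[of "(T ^^ n) x" "(T ^^ n) y"] x y by simp
    moreover have "(\<Sum>i<n. f n i) = 0" unfolding f_def by simp
    ultimately show ?thesis using sums_iff_shift[of "f n" n] by simp
  qed
  have fsum: "summable (f n)" for n using fs sums_summable by blast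
  define D where "D N m = (\<Sum>n<N. if n \<le> m then acoef \<alpha> n * ccoef \<alpha> (m - n) else 0)" for N m
  define E where "E N m = (\<Sum>n<N. complex_of_real (acoef \<alpha> n) * f n m)" for N m
  have ED: "E N m = g m * complex_of_real (D N m)" for N m
  proof -
    have "E N m = (\<Sum>n<N. g m * complex_of_real (if n \<le> m then acoef \<alpha> n * ccoef \<alpha> (m - n) else 0))"
      unfolding E_def f_def by (intro sum.cong refl) (simp add: mult_ac)
    also have "\<dots> = g m * complex_of_real (D N m)"
      unfolding D_def by (simp add: sum_distrib_left[symmetric] of_real_sum[symmetric] del: of_real_sum)
    finally show ?thesis .
  qed
  have Es: "summable (E N)" for N unfolding E_def
    by (intro summable_sum summable_mult fsum)
  have SE: "(\<Sum>n<N. complex_of_real (acoef \<alpha> n) * Qf ((T ^^ n) x) ((T ^^ n) y)) = suminf (E N)" for N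
  proof -
    have "(\<Sum>n<N. complex_of_real (acoef \<alpha> n) * Qf ((T ^^ n) x) ((T ^^ n) y))
        = (\<Sum>n<N. suminf (\<lambda>m. complex_of_real (acoef \<alpha> n) * f n m))"
    proof (intro sum.cong refl)
      fix n show "complex_of_real (acoef \<alpha> n) * Qf ((T ^^ n) x) ((T ^^ n) y)
          = suminf (\<lambda>m. complex_of_real (acoef \<alpha> n) * f n m)"
        using sums_unique[OF fs[of n]] suminf_mult[OF fsum[of n]] by simp
    qed
    also have "\<dots> = suminf (E N)" unfolding E_def
      by (rule suminf_sum[symmetric]) (intro summable_mult fsum)
    finally show ?thesis .
  qed
  have D_low: "D N m = (if m = 0 then 1 else 0)" if "m < N" for N m
  proof -
    have "D N m = (\<Sum>n\<in>{n\<in>{..<N}. n \<le> m}. acoef \<alpha> n * ccoef \<alpha> (m - n))"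
      unfolding D_def by (rule sum.inter_filter[symmetric]) simp
    also have "{n\<in>{..<N}. n \<le> m} = {..m}" using that by auto
    finally have d: "D N m = (\<Sum>n\<le>m. acoef \<alpha> n * ccoef \<alpha> (m - n))" .
    show ?thesis
    proof (cases "m = 0")
      case True then show ?thesis using d by (simp add: ccoef_def)
    next
      case False then show ?thesis using d conv_zero[of m \<alpha>] by simp
    qed
  qed
  have D_high: "\<bar>D N m\<bar> \<le> acoef \<alpha> m" if "N \<le> m" for N m
  proof -
    have "D N m = (\<Sum>n<N. acoef \<alpha> n * ccoef \<alpha> (m - n))"
      unfolding D_def using that by (intro sum.cong refl) auto
    then show ?thesis using conv_partial[of \<alpha> N m] a0 that by simp
  qed
  have low: "(\<Sum>m<N. E N m) = g 0" if "1 \<le> N" for N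
  proof -
    have "(\<Sum>m<N. E N m) = (\<Sum>m<N. if m = 0 then g m else 0)"
      using D_low by (intro sum.cong refl) (simp add: ED)
    also have "\<dots> = g 0" using that by (simp add: sum.delta)
    finally show ?thesis .
  qed
  have tail_bound: "norm (\<Sum>j. E N (j + N)) \<le> (\<Sum>j. h (j + N))" for N
  proof -
    have b: "norm (E N (j + N)) \<le> h (j + N)" for j
    proof -
      have "norm (E N (j + N)) = cmod (g (j + N)) * \<bar>D N (j + N)\<bar>" by (simp add: ED norm_mult)
      also have "\<dots> \<le> ((tn (j + N))\<^sup>2 * K) * acoef \<alpha> (j + N)"
        using gb D_high[of N "j + N"] K0 by (intro mult_mono) auto
      finally show ?thesis unfolding h_def by (simp add: mult_ac)
    qed
    have hs': "summable (\<lambda>j. h (j + N))" using hs by (simp only: summable_iff_shift)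
    have ns: "summable (\<lambda>j. norm (E N (j + N)))"
      by (rule summable_comparison_test'[OF hs']) (use b in simp)
    have "norm (\<Sum>j. E N (j + N)) \<le> (\<Sum>j. norm (E N (j + N)))" by (rule summable_norm[OF ns])
    also have "\<dots> \<le> (\<Sum>j. h (j + N))" by (rule suminf_le[OF b ns hs'])
    finally show ?thesis .
  qed
  have g0: "g 0 = hip H x y" unfolding g_def by simp
  show ?thesis unfolding sums_def
  proof (rule LIMSEQ_I)
    fix r :: real assume r: "0 < r"
    obtain N0 where N0: "\<And>n. n \<ge> N0 \<Longrightarrow> norm (\<Sum>i. h (i + n)) < r"
      using suminf_exist_split[OF r hs] by blast
    show "\<exists>no. \<forall>N\<ge>no. norm ((\<Sum>n<N. complex_of_real (acoef \<alpha> n) * Qf ((T ^^ n) x) ((T ^^ n) y)) - hip H x y) < r"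
    proof (intro exI allI impI)
      fix N assume N: "max N0 1 \<le> N"
      have "(\<Sum>n<N. complex_of_real (acoef \<alpha> n) * Qf ((T ^^ n) x) ((T ^^ n) y)) - hip H x y
          = (\<Sum>j. E N (j + N))"
        using SE[of N] suminf_split_initial_segment[OF Es[of N], of N] low[of N] N g0 by simp
      then have "norm ((\<Sum>n<N. complex_of_real (acoef \<alpha> n) * Qf ((T ^^ n) x) ((T ^^ n) y)) - hip H x y)
          \<le> (\<Sum>j. h (j + N))" using tail_bound by simp
      also have "\<dots> \<le> norm (\<Sum>j. h (j + N))" by simp
      also have "\<dots> < r" using N0 N by simp
      finally show "norm ((\<Sum>n<N. complex_of_real (acoef \<alpha> n) * Qf ((T ^^ n) x) ((T ^^ n) y)) - hip H x y) < r" .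
    qed
  qed
qed

end

lemma sum_if_ge:
  fixes t :: "nat \<Rightarrow> 'b::comm_monoid_add"
  shows "(\<Sum>j<n. if m \<le> j then t j else 0) = sum t {m..<n}"
proof -
  have "(\<Sum>j<n. if m \<le> j then t j else 0) = sum t {j\<in>{..<n}. m \<le> j}"
    by (rule sum.inter_filter[symmetric]) simp
  also have "{j\<in>{..<n}. m \<le> j} = {m..<n}" by auto
  finally show ?thesis .
qed

lemma sum_lessThan_diff:
  fixes t :: "nat \<Rightarrow> 'b::ab_group_add"
  assumes "m \<le> n"
  shows "(\<Sum>j<n. t j) - (\<Sum>j<m. t j) = sum t {m..<n}"
  using sum_diff_nat_ivl[of 0 m n t] assms by (simp add: atLeast0LessThan)

context setting begin

sublocale Qps: psform H Qf by (rule Q_psform)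

definition Sd :: "'a set" where
  "Sd = (SOME S. countable S \<and> S \<subseteq> hcarrier H \<and>
     (\<forall>x\<in>hcarrier H. \<forall>e>0. \<exists>s\<in>S. hnorm H (hminus H x s) < e))"

lemma Sd_prop: "countable Sd \<and> Sd \<subseteq> hcarrier H \<and>
     (\<forall>x\<in>hcarrier H. \<forall>e>0. \<exists>s\<in>Sd. hnorm H (hminus H x s) < e)"
  unfolding Sd_def using sep unfolding separable_def by (rule someI_ex)

lemma Sd_ne: "Sd \<noteq> {}"
  using Sd_prop zero_in by (metis empty_iff zero_less_one)

definition sq :: "nat \<Rightarrow> 'a" where "sq k = from_nat_into Sd k"

lemma sq_in[simp]: "sq k \<in> hcarrier H"
  unfolding sq_def using from_nat_into[OF Sd_ne] Sd_prop by blast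

lemma sq_dense: "x \<in> hcarrier H \<Longrightarrow> e > 0 \<Longrightarrow> \<exists>k. hnorm H (hminus H x (sq k)) < e"
proof -
  assume x: "x \<in> hcarrier H" and e: "e > 0"
  obtain s where s: "s \<in> Sd" "hnorm H (hminus H x s) < e" using Sd_prop x e by blast
  have "s \<in> range sq" unfolding sq_def using range_from_nat_into[OF Sd_ne] Sd_prop s by simp
  then show ?thesis using s by auto
qed

lemma Hgs_loc: "gsloc H (hip H) sq"
  unfolding gsloc_def gsloc_axioms_def using psform_ip by simp

sublocale Hgs: gsloc H "hip H" sq by (rule Hgs_loc)

definition ee :: "nat \<Rightarrow> 'a" where "ee = gs H (hip H) sq"

lemma ee_in[simp]: "ee j \<in> hcarrier H" unfolding ee_def by simp

lemma Qgs_loc: "gsloc H Qf ee"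
  unfolding gsloc_def gsloc_axioms_def using Q_psform by simp

sublocale Qgs: gsloc H Qf ee by (rule Qgs_loc)

definition ww :: "nat \<Rightarrow> 'a" where "ww = gs H Qf ee"

lemma ww_in[simp]: "ww j \<in> hcarrier H" unfolding ww_def by simp

lemma ee_orth: "i \<noteq> j \<Longrightarrow> hip H (ee i) (ee j) = 0"
  unfolding ee_def by (rule Hgs.gw_orth)

lemma ee_norm: "ee j = hzero H \<or> hip H (ee j) (ee j) = 1"
  unfolding ee_def by (rule Hgs.gw_norm)

lemma sq_repr: "sq k = vsum H (\<lambda>j. hscale H (hip H (sq k) (ee j)) (ee j)) (Suc k)"
proof -
  define d where "d = hminus H (sq k) (proj H (hip H) (gs H (hip H) sq) (Suc k) (sq k))"
  have d: "d \<in> hcarrier H" unfolding d_def by simp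
  have "Re (hip H d d) = 0" unfolding d_def by (rule Hgs.null_later) simp
  then have "hip H d d = 0" using ip_pos[OF d] by (simp add: complex_eq_iff)
  then have "d = hzero H" using zero_iff[OF d] by simp
  then have "sq k = proj H (hip H) (gs H (hip H) sq) (Suc k) (sq k)"
    unfolding d_def by (rule minus_zero_eq[rotated 2]) simp_all
  then show ?thesis unfolding proj_def ee_def .
qed

lemma Q_dense:
  assumes x: "x \<in> hcarrier H" and e: "e > 0"
  shows "\<exists>m lam. Re (Qf (hminus H x (vsum H (\<lambda>j. hscale H (lam j) (ee j)) m))
                      (hminus H x (vsum H (\<lambda>j. hscale H (lam j) (ee j)) m))) < e"
proof -
  obtain k where k: "hnorm H (hminus H x (sq k)) < sqrt e" using sq_dense[OF x, of "sqrt e"] e by auto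
  define d where "d = hminus H x (sq k)"
  have d: "d \<in> hcarrier H" unfolding d_def using x by simp
  have "Re (Qf d d) \<le> (hnorm H d)\<^sup>2" by (rule Q_re_bounds(2)[OF d])
  also have "\<dots> < (sqrt e)\<^sup>2" using k d unfolding d_def by (intro power_strict_mono) simp_all
  also have "\<dots> = e" using e by simp
  finally have "Re (Qf d d) < e" .
  then have r: "Re (Qf (hminus H x (vsum H (\<lambda>j. hscale H (hip H (sq k) (ee j)) (ee j)) (Suc k)))
                      (hminus H x (vsum H (\<lambda>j. hscale H (hip H (sq k) (ee j)) (ee j)) (Suc k)))) < e"
    unfolding d_def by (subst (asm) (1 2) sq_repr)
  show ?thesis by (rule exI[of _ "Suc k"], rule exI[of _ "\<lambda>j. hip H (sq k) (ee j)"], rule r)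
qed

lemma Q_parseval: "x \<in> hcarrier H \<Longrightarrow>
   (\<lambda>K. Re (Qf (hminus H x (proj H Qf ww K x)) (hminus H x (proj H Qf ww K x)))) \<longlonglongrightarrow> 0"
  unfolding ww_def by (rule Qgs.parseval_lim) (use Q_dense in auto)

lemma ee_zero_ww: "ee j = hzero H \<Longrightarrow> ww j = hzero H"
proof -
  assume e0: "ee j = hzero H"
  define u where "u = hminus H (ee j) (proj H Qf ww j (ee j))"
  have u: "u \<in> hcarrier H" unfolding u_def by (simp add: ww_def)
  have "Re (Qf u u) = Re (Qf (ee j) (ee j)) - (\<Sum>i<j. (cmod (Qf (ee j) (ww i)))\<^sup>2)"
    unfolding u_def ww_def by (rule Qgs.pyth_re) simp
  also have "\<dots> = 0" using e0 by simp
  finally have "Re (Qf u u) = 0" .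
  moreover have "ww j = nrmz H Qf u" unfolding u_def ww_def by (rule gs_eq)
  ultimately show ?thesis unfolding nrmz_def by simp
qed

lemma cf_ee: "Qf x (ww j) * hip H (ee j) (ee j) = Qf x (ww j)" if "x \<in> hcarrier H" for x
  using ee_norm[of j] ee_zero_ww[of j] that by auto

definition Sx :: "'a \<Rightarrow> nat \<Rightarrow> 'a" where
  "Sx x n = vsum H (\<lambda>j. hscale H (Qf x (ww j)) (ee j)) n"

lemma Sx_in[simp]: "Sx x n \<in> hcarrier H" unfolding Sx_def by simp

lemma Sx_ip: "x \<in> hcarrier H \<Longrightarrow> y \<in> hcarrier H \<Longrightarrow>
  hip H (Sx x n) (Sx y n) = (\<Sum>j<n. Qf x (ww j) * cnj (Qf y (ww j)))"
proof -
  assume x: "x \<in> hcarrier H" and y: "y \<in> hcarrier H"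
  have "hip H (Sx x n) (Sx y n) = (\<Sum>j<n. Qf x (ww j) * cnj (Qf y (ww j)) * hip H (ee j) (ee j))"
    unfolding Sx_def by (rule psform.orth_vsum[OF psform_ip]) (simp_all add: ee_orth)
  also have "\<dots> = (\<Sum>j<n. Qf x (ww j) * cnj (Qf y (ww j)))"
  proof (intro sum.cong refl)
    fix j show "Qf x (ww j) * cnj (Qf y (ww j)) * hip H (ee j) (ee j) = Qf x (ww j) * cnj (Qf y (ww j))"
      using cf_ee[OF x, of j] by (metis mult.assoc mult.commute)
  qed
  finally show ?thesis .
qed

lemma Sx_lim: 
  assumes x: "x \<in> hcarrier H" and y: "y \<in> hcarrier H"
  shows "(\<lambda>n. hip H (Sx x n) (Sx y n)) \<longlonglongrightarrow> Qf x y"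
proof -
  define a where "a K = Re (Qf (hminus H x (proj H Qf ww K x)) (hminus H x (proj H Qf ww K x)))" for K
  define b where "b K = Re (Qf (hminus H y (proj H Qf ww K y)) (hminus H y (proj H Qf ww K y)))" for K
  have a: "a \<longlonglongrightarrow> 0" unfolding a_def by (rule Q_parseval[OF x])
  have b: "b \<longlonglongrightarrow> 0" unfolding b_def by (rule Q_parseval[OF y])
  have eq: "hip H (Sx x n) (Sx y n) - Qf x y
      = - Qf (hminus H x (proj H Qf ww n x)) (hminus H y (proj H Qf ww n y))" for n
    unfolding Sx_ip[OF x y] ww_def using Qgs.pyth[OF x y, of n] by simp
  have bnd: "norm (hip H (Sx x n) (Sx y n) - Qf x y) \<le> sqrt (a n) * sqrt (b n)" for n
    unfolding eq norm_minus_cancel a_def b_def by (rule Qps.F_cs) (simp_all add: x y ww_def)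
  have "(\<lambda>n. sqrt (a n) * sqrt (b n)) \<longlonglongrightarrow> sqrt 0 * sqrt 0"
    by (rule tendsto_mult[OF tendsto_real_sqrt[OF a] tendsto_real_sqrt[OF b]])
  then have "(\<lambda>n. sqrt (a n) * sqrt (b n)) \<longlonglongrightarrow> 0" by simp
  then have "(\<lambda>n. hip H (Sx x n) (Sx y n) - Qf x y) \<longlonglongrightarrow> 0" by (rule null_comp[OF bnd])
  then show ?thesis by (simp add: LIM_zero_iff)
qed

lemma cf_summable:
  assumes x: "x \<in> hcarrier H"
  shows "summable (\<lambda>j. (cmod (Qf x (ww j)))\<^sup>2)"
proof (rule summableI_nonneg_bounded)
  fix n
  have "0 \<le> Re (Qf (hminus H x (proj H Qf ww n x)) (hminus H x (proj H Qf ww n x)))"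
    using Qps.F_pos[of "hminus H x (proj H Qf ww n x)"] x by (simp add: ww_def)
  also have "Re (Qf (hminus H x (proj H Qf ww n x)) (hminus H x (proj H Qf ww n x)))
      = Re (Qf x x) - (\<Sum>j<n. (cmod (Qf x (ww j)))\<^sup>2)"
    unfolding ww_def by (rule Qgs.pyth_re[OF x])
  finally show "(\<Sum>j<n. (cmod (Qf x (ww j)))\<^sup>2) \<le> Re (Qf x x)" by simp
qed simp

lemma Sx_diff:
  assumes x: "x \<in> hcarrier H" and mn: "m \<le> n"
  shows "(hnorm H (hminus H (Sx x n) (Sx x m)))\<^sup>2 = (\<Sum>j\<in>{m..<n}. (cmod (Qf x (ww j)))\<^sup>2)"
proof -
  define c where "c j = (if m \<le> j then Qf x (ww j) else 0)" for j
  have eqv: "hminus H (Sx x n) (Sx x m) = vsum H (\<lambda>j. hscale H (c j) (ee j)) n"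
  proof (rule ip_ext)
    fix z assume z: "z \<in> hcarrier H"
    have "hip H (vsum H (\<lambda>j. hscale H (c j) (ee j)) n) z = (\<Sum>j<n. c j * hip H (ee j) z)"
      using z by (simp add: ip_vsum_l)
    also have "\<dots> = (\<Sum>j<n. if m \<le> j then Qf x (ww j) * hip H (ee j) z else 0)"
      unfolding c_def by (intro sum.cong refl) simp
    also have "\<dots> = (\<Sum>j<n. Qf x (ww j) * hip H (ee j) z) - (\<Sum>j<m. Qf x (ww j) * hip H (ee j) z)"
      unfolding sum_if_ge by (rule sum_lessThan_diff[OF mn, symmetric])
    also have "\<dots> = hip H (hminus H (Sx x n) (Sx x m)) z"
      unfolding Sx_def using z by (simp add: ip_vsum_l)
    finally show "hip H (hminus H (Sx x n) (Sx x m)) z = hip H (vsum H (\<lambda>j. hscale H (c j) (ee j)) n) z" by simp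
  qed simp_all
  have "hip H (vsum H (\<lambda>j. hscale H (c j) (ee j)) n) (vsum H (\<lambda>j. hscale H (c j) (ee j)) n)
      = (\<Sum>j<n. c j * cnj (c j) * hip H (ee j) (ee j))"
    by (rule psform.orth_vsum[OF psform_ip]) (simp_all add: ee_orth)
  also have "\<dots> = (\<Sum>j<n. complex_of_real (if m \<le> j then (cmod (Qf x (ww j)))\<^sup>2 else 0))"
  proof (intro sum.cong refl)
    fix j
    have "c j * hip H (ee j) (ee j) = c j" unfolding c_def using cf_ee[OF x, of j] by simp
    then have "c j * cnj (c j) * hip H (ee j) (ee j) = c j * cnj (c j)" by (metis mult.assoc mult.commute)
    also have "\<dots> = complex_of_real (if m \<le> j then (cmod (Qf x (ww j)))\<^sup>2 else 0)"
      unfolding c_def by (simp add: complex_norm_square[symmetric])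
    finally show "c j * cnj (c j) * hip H (ee j) (ee j) = complex_of_real (if m \<le> j then (cmod (Qf x (ww j)))\<^sup>2 else 0)" .
  qed
  also have "\<dots> = complex_of_real (\<Sum>j\<in>{m..<n}. (cmod (Qf x (ww j)))\<^sup>2)"
    by (simp only: of_real_sum[symmetric] sum_if_ge)
  finally show ?thesis unfolding eqv by (simp add: nm_sq)
qed

lemma Sx_cauchy:
  assumes x: "x \<in> hcarrier H" and e: "0 < e"
  shows "\<exists>N. \<forall>m\<ge>N. \<forall>n\<ge>N. hnorm H (hminus H (Sx x m) (Sx x n)) < e"
proof -
  obtain N where N: "\<And>m n. m \<ge> N \<Longrightarrow> norm (\<Sum>j\<in>{m..<n}. (cmod (Qf x (ww j)))\<^sup>2) < e\<^sup>2"
    using cf_summable[OF x] e unfolding summable_Cauchy by (meson zero_less_power)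
  have main: "hnorm H (hminus H (Sx x n) (Sx x m)) < e" if "N \<le> m" "m \<le> n" for m n
  proof -
    have "(hnorm H (hminus H (Sx x n) (Sx x m)))\<^sup>2 < e\<^sup>2"
      using Sx_diff[OF x that(2)] N[OF that(1), of n] by (simp add: sum_nonneg)
    then show ?thesis using e by (simp add: power_less_imp_less_base)
  qed
  show ?thesis
  proof (intro exI allI impI)
    fix m n assume m: "N \<le> m" and n: "N \<le> n"
    show "hnorm H (hminus H (Sx x m) (Sx x n)) < e"
    proof (cases "m \<le> n")
      case True then show ?thesis using main[OF m True] nm_minus_sym[of "Sx x n" "Sx x m"] by simp
    next
      case False then show ?thesis using main[OF n] by simp
    qed
  qed
qed

definition Vf :: "'a \<Rightarrow> 'a" where
  "Vf x = (SOME v. v \<in> hcarrier H \<and> conv (Sx x) v)"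

lemma Vf_prop: "x \<in> hcarrier H \<Longrightarrow> Vf x \<in> hcarrier H \<and> conv (Sx x) (Vf x)"
proof -
  assume x: "x \<in> hcarrier H"
  have "\<exists>v\<in>hcarrier H. (\<lambda>n. hnorm H (hminus H (Sx x n) v)) \<longlonglongrightarrow> 0"
    using hs Sx_cauchy[OF x] unfolding hilbert_space_def by simp
  then have "\<exists>v. v \<in> hcarrier H \<and> conv (Sx x) v" unfolding conv_def by blast
  then show ?thesis unfolding Vf_def by (rule someI_ex)
qed

lemma Vf_in[simp]: "x \<in> hcarrier H \<Longrightarrow> Vf x \<in> hcarrier H" using Vf_prop by blast

lemma Vf_ip[simp]: "x \<in> hcarrier H \<Longrightarrow> y \<in> hcarrier H \<Longrightarrow> hip H (Vf x) (Vf y) = Qf x y"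
proof -
  assume x: "x \<in> hcarrier H" and y: "y \<in> hcarrier H"
  have "(\<lambda>n. hip H (Sx x n) (Sx y n)) \<longlonglongrightarrow> hip H (Vf x) (Vf y)"
    by (rule ip_cont) (use Vf_prop x y in auto)
  then show ?thesis using Sx_lim[OF x y] LIMSEQ_unique by blast
qed

lemma Vf_add: "x \<in> hcarrier H \<Longrightarrow> y \<in> hcarrier H \<Longrightarrow> Vf (hplus H x y) = hplus H (Vf x) (Vf y)"
proof -
  assume x: "x \<in> hcarrier H" and y: "y \<in> hcarrier H"
  define d where "d = hminus H (Vf (hplus H x y)) (hplus H (Vf x) (Vf y))"
  have d: "d \<in> hcarrier H" unfolding d_def using x y by simp
  have "hip H d d = 0" unfolding d_def using x y by (simp add: algebra_simps)
  then have "d = hzero H" using zero_iff[OF d] by simp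
  then show ?thesis unfolding d_def by (rule minus_zero_eq[rotated 2]) (simp_all add: x y)
qed

lemma Vf_sc: "x \<in> hcarrier H \<Longrightarrow> Vf (hscale H a x) = hscale H a (Vf x)"
proof -
  assume x: "x \<in> hcarrier H"
  define d where "d = hminus H (Vf (hscale H a x)) (hscale H a (Vf x))"
  have d: "d \<in> hcarrier H" unfolding d_def using x by simp
  have "hip H d d = 0" unfolding d_def using x by (simp add: algebra_simps)
  then have "d = hzero H" using zero_iff[OF d] by simp
  then show ?thesis unfolding d_def by (rule minus_zero_eq[rotated 2]) (simp_all add: x)
qed

end

lemma sq_sum_le: "((a::real) + b)\<^sup>2 \<le> 2 * (a\<^sup>2 + b\<^sup>2)"
proof -
  have "2 * (a\<^sup>2 + b\<^sup>2) - (a + b)\<^sup>2 = (a - b)\<^sup>2" by (simp add: power2_eq_square algebra_simps)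
  moreover have "0 \<le> (a - b)\<^sup>2" by simp
  ultimately show ?thesis by linarith
qed

lemma prod_le_sq: "0 \<le> (a::real) \<Longrightarrow> 0 \<le> b \<Longrightarrow> a * b \<le> a\<^sup>2 + b\<^sup>2"
proof -
  assume a: "0 \<le> a" and b: "0 \<le> b"
  have "a\<^sup>2 + b\<^sup>2 - 2 * (a * b) = (a - b)\<^sup>2" by (simp add: power2_eq_square algebra_simps)
  moreover have "0 \<le> (a - b)\<^sup>2" by simp
  moreover have "0 \<le> a * b" using a b by simp
  ultimately show ?thesis by linarith
qed

lemma D_carrier: "f \<in> hcarrier (dirichlet \<alpha> E) \<longleftrightarrow>
   (\<forall>n. f n \<in> hcarrier E) \<and> summable (\<lambda>n. real (n + 1) powr \<alpha> * (hnorm E (f n))\<^sup>2)"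
  unfolding dirichlet_def by simp
lemma D_plus[simp]: "hplus (dirichlet \<alpha> E) f g = (\<lambda>n. hplus E (f n) (g n))"
  unfolding dirichlet_def by simp
lemma D_scale[simp]: "hscale (dirichlet \<alpha> E) a f = (\<lambda>n. hscale E a (f n))"
  unfolding dirichlet_def by simp
lemma D_zero[simp]: "hzero (dirichlet \<alpha> E) = (\<lambda>n. hzero E)"
  unfolding dirichlet_def by simp
lemma D_ip: "hip (dirichlet \<alpha> E) f g = (\<Sum>n. complex_of_real (real (n + 1) powr \<alpha>) * hip E (f n) (g n))"
  unfolding dirichlet_def by simp
lemma D_minus: "hminus (dirichlet \<alpha> E) f g = (\<lambda>n. hminus E (f n) (g n))"
  unfolding hminus_def by simp

context ips
begin

lemma sc_add: "x \<in> hcarrier H \<Longrightarrow> y \<in> hcarrier H \<Longrightarrow> hscale H a (hplus H x y) = hplus H (hscale H a x) (hscale H a y)"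
  by (rule ip_ext) (simp_all add: algebra_simps)
lemma add_sc: "x \<in> hcarrier H \<Longrightarrow> hscale H (a + b) x = hplus H (hscale H a x) (hscale H b x)"
  by (rule ip_ext) (simp_all add: algebra_simps)
lemma sc_zero_l: "x \<in> hcarrier H \<Longrightarrow> hscale H 0 x = hzero H"
  by (rule ip_ext) simp_all
lemma sc_zero_r: "hscale H a (hzero H) = hzero H"
  by (rule ip_ext) simp_all

lemma nm_plus_sq: "x \<in> hcarrier H \<Longrightarrow> y \<in> hcarrier H \<Longrightarrow>
   (hnorm H (hplus H x y))\<^sup>2 \<le> 2 * ((hnorm H x)\<^sup>2 + (hnorm H y)\<^sup>2)"
proof -
  assume x: "x \<in> hcarrier H" and y: "y \<in> hcarrier H"
  have "(hnorm H (hplus H x y))\<^sup>2 \<le> (hnorm H x + hnorm H y)\<^sup>2"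
    using tri[OF x y] x y by (intro power_mono) simp_all
  also have "\<dots> \<le> 2 * ((hnorm H x)\<^sup>2 + (hnorm H y)\<^sup>2)"
    by (rule sq_sum_le)
  finally show ?thesis .
qed

lemma ip_le_sq: "x \<in> hcarrier H \<Longrightarrow> y \<in> hcarrier H \<Longrightarrow>
   cmod (hip H x y) \<le> (hnorm H x)\<^sup>2 + (hnorm H y)\<^sup>2"
proof -
  assume x: "x \<in> hcarrier H" and y: "y \<in> hcarrier H"
  have "cmod (hip H x y) \<le> hnorm H x * hnorm H y" by (rule cs[OF x y])
  also have "\<dots> \<le> (hnorm H x)\<^sup>2 + (hnorm H y)\<^sup>2"
    using x y by (intro prod_le_sq) simp_all
  finally show ?thesis .
qed

abbreviation "DD \<alpha> \<equiv> dirichlet \<alpha> H"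

lemma D_ip_summable:
  assumes f: "f \<in> hcarrier (DD \<alpha>)" and g: "g \<in> hcarrier (DD \<alpha>)"
  shows "summable (\<lambda>n. complex_of_real (real (n + 1) powr \<alpha>) * hip H (f n) (g n))"
proof (rule summable_comparison_test')
  have fs: "summable (\<lambda>n. real (n + 1) powr \<alpha> * (hnorm H (f n))\<^sup>2)" and
       gs: "summable (\<lambda>n. real (n + 1) powr \<alpha> * (hnorm H (g n))\<^sup>2)"
    using f g by (simp_all add: D_carrier)
  show "summable (\<lambda>n. real (n + 1) powr \<alpha> * (hnorm H (f n))\<^sup>2 + real (n + 1) powr \<alpha> * (hnorm H (g n))\<^sup>2)"
    by (rule summable_add[OF fs gs])
  fix n
  have fn: "f n \<in> hcarrier H" and gn: "g n \<in> hcarrier H" using f g by (simp_all add: D_carrier)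
  have "norm (complex_of_real (real (n + 1) powr \<alpha>) * hip H (f n) (g n))
      = real (n + 1) powr \<alpha> * cmod (hip H (f n) (g n))" by (simp add: norm_mult)
  also have "\<dots> \<le> real (n + 1) powr \<alpha> * ((hnorm H (f n))\<^sup>2 + (hnorm H (g n))\<^sup>2)"
    by (intro mult_left_mono ip_le_sq fn gn) simp
  finally show "norm (complex_of_real (real (n + 1) powr \<alpha>) * hip H (f n) (g n))
      \<le> real (n + 1) powr \<alpha> * (hnorm H (f n))\<^sup>2 + real (n + 1) powr \<alpha> * (hnorm H (g n))\<^sup>2"
    by (simp add: algebra_simps)
qed

lemma D_ip_sums:
  "f \<in> hcarrier (DD \<alpha>) \<Longrightarrow> g \<in> hcarrier (DD \<alpha>) \<Longrightarrow>
   (\<lambda>n. complex_of_real (real (n + 1) powr \<alpha>) * hip H (f n) (g n)) sums hip (DD \<alpha>) f g"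
  unfolding D_ip by (rule summable_sums[OF D_ip_summable])

lemma D_self:
  assumes f: "f \<in> hcarrier (DD \<alpha>)"
  shows "hip (DD \<alpha>) f f = complex_of_real (\<Sum>n. real (n + 1) powr \<alpha> * (hnorm H (f n))\<^sup>2)"
proof -
  have fs: "summable (\<lambda>n. real (n + 1) powr \<alpha> * (hnorm H (f n))\<^sup>2)" using f by (simp add: D_carrier)
  have s0: "(\<lambda>n. complex_of_real (real (n + 1) powr \<alpha> * (hnorm H (f n))\<^sup>2)) sums
      complex_of_real (\<Sum>n. real (n + 1) powr \<alpha> * (hnorm H (f n))\<^sup>2)"
    by (subst sums_of_real_iff) (rule summable_sums[OF fs])
  have e: "(\<lambda>n. complex_of_real (real (n + 1) powr \<alpha> * (hnorm H (f n))\<^sup>2))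
      = (\<lambda>n. complex_of_real (real (n + 1) powr \<alpha>) * hip H (f n) (f n))"
    using f by (simp add: ip_self D_carrier)
  show ?thesis using sums_unique2[OF D_ip_sums[OF f f] s0[unfolded e]] .
qed

lemma D_ips: "inner_product_space (DD \<alpha>)"
proof -
  let ?D = "DD \<alpha>"
  let ?w = "\<lambda>n::nat. real (n + 1) powr \<alpha>"
  have cD: "f \<in> hcarrier ?D \<longleftrightarrow> (\<forall>n. f n \<in> hcarrier H) \<and> summable (\<lambda>n. ?w n * (hnorm H (f n))\<^sup>2)" for f
    by (rule D_carrier)
  have z: "hzero ?D \<in> hcarrier ?D" unfolding cD by simp
  have p: "hplus ?D f g \<in> hcarrier ?D" if f: "f \<in> hcarrier ?D" and g: "g \<in> hcarrier ?D" for f g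
  proof -
    have fs: "summable (\<lambda>n. ?w n * (hnorm H (f n))\<^sup>2)" and gs: "summable (\<lambda>n. ?w n * (hnorm H (g n))\<^sup>2)"
      and fn: "\<And>n. f n \<in> hcarrier H" and gn: "\<And>n. g n \<in> hcarrier H" using f g cD by auto
    have "summable (\<lambda>n. ?w n * (hnorm H (hplus H (f n) (g n)))\<^sup>2)"
    proof (rule summable_comparison_test')
      show "summable (\<lambda>n. 2 * (?w n * (hnorm H (f n))\<^sup>2 + ?w n * (hnorm H (g n))\<^sup>2))"
        by (intro summable_mult summable_add fs gs)
      fix n
      have "?w n * (hnorm H (hplus H (f n) (g n)))\<^sup>2 \<le> ?w n * (2 * ((hnorm H (f n))\<^sup>2 + (hnorm H (g n))\<^sup>2))"
        by (intro mult_left_mono nm_plus_sq fn gn) simp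
      then show "norm (?w n * (hnorm H (hplus H (f n) (g n)))\<^sup>2) \<le> 2 * (?w n * (hnorm H (f n))\<^sup>2 + ?w n * (hnorm H (g n))\<^sup>2)"
        by (simp add: algebra_simps)
    qed
    then show ?thesis unfolding cD using fn gn by simp
  qed
  have s: "hscale ?D a f \<in> hcarrier ?D" if f: "f \<in> hcarrier ?D" for a f
  proof -
    have fs: "summable (\<lambda>n. ?w n * (hnorm H (f n))\<^sup>2)" and fn: "\<And>n. f n \<in> hcarrier H" using f cD by auto
    have "summable (\<lambda>n. (cmod a)\<^sup>2 * (?w n * (hnorm H (f n))\<^sup>2))" by (rule summable_mult[OF fs])
    then have "summable (\<lambda>n. ?w n * (hnorm H (hscale H a (f n)))\<^sup>2)"
      using fn by (simp add: nm_sc power_mult_distrib mult_ac)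
    then show ?thesis unfolding cD using fn by simp
  qed
  have fnin: "f \<in> hcarrier ?D \<Longrightarrow> f n \<in> hcarrier H" for f n using cD by auto
  show ?thesis unfolding inner_product_space_def
  proof (intro conjI ballI allI impI)
    show "hzero ?D \<in> hcarrier ?D" by (rule z)
  next
    fix f g assume "f \<in> hcarrier ?D" "g \<in> hcarrier ?D" then show "hplus ?D f g \<in> hcarrier ?D" by (rule p)
  next
    fix a f assume "f \<in> hcarrier ?D" then show "hscale ?D a f \<in> hcarrier ?D" by (rule s)
  next
    fix f g h assume f: "f \<in> hcarrier ?D" and g: "g \<in> hcarrier ?D" and h: "h \<in> hcarrier ?D"
    show "hplus ?D (hplus ?D f g) h = hplus ?D f (hplus ?D g h)"
      using fnin[OF f] fnin[OF g] fnin[OF h] by (simp add: add_assoc)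
  next
    fix f g assume f: "f \<in> hcarrier ?D" and g: "g \<in> hcarrier ?D"
    show "hplus ?D f g = hplus ?D g f" using fnin[OF f] fnin[OF g] by (simp add: add_comm)
  next
    fix f assume f: "f \<in> hcarrier ?D"
    show "hplus ?D f (hzero ?D) = f" using fnin[OF f] by simp
  next
    fix f assume f: "f \<in> hcarrier ?D"
    show "hplus ?D f (hscale ?D (-1) f) = hzero ?D" using fnin[OF f] by (simp add: add_neg)
  next
    fix f assume f: "f \<in> hcarrier ?D"
    show "hscale ?D 1 f = f" using fnin[OF f] by simp
  next
    fix a b f assume f: "f \<in> hcarrier ?D"
    show "hscale ?D a (hscale ?D b f) = hscale ?D (a * b) f" using fnin[OF f] by (simp add: sc_sc)
  next
    fix a f g assume f: "f \<in> hcarrier ?D" and g: "g \<in> hcarrier ?D"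
    show "hscale ?D a (hplus ?D f g) = hplus ?D (hscale ?D a f) (hscale ?D a g)"
      using fnin[OF f] fnin[OF g] by (simp add: sc_add)
  next
    fix a b f assume f: "f \<in> hcarrier ?D"
    show "hscale ?D (a + b) f = hplus ?D (hscale ?D a f) (hscale ?D b f)"
      using fnin[OF f] by (simp add: add_sc)
  next
    fix f g h assume f: "f \<in> hcarrier ?D" and g: "g \<in> hcarrier ?D" and h: "h \<in> hcarrier ?D"
    have "hip ?D (hplus ?D f g) h = (\<Sum>n. complex_of_real (?w n) * hip H (f n) (h n) + complex_of_real (?w n) * hip H (g n) (h n))"
      unfolding D_ip using fnin[OF f] fnin[OF g] fnin[OF h] by (simp add: distrib_left)
    also have "\<dots> = hip ?D f h + hip ?D g h"
      unfolding D_ip by (rule suminf_add[symmetric, OF D_ip_summable[OF f h] D_ip_summable[OF g h]])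
    finally show "hip ?D (hplus ?D f g) h = hip ?D f h + hip ?D g h" .
  next
    fix a f g assume f: "f \<in> hcarrier ?D" and g: "g \<in> hcarrier ?D"
    have "hip ?D (hscale ?D a f) g = (\<Sum>n. a * (complex_of_real (?w n) * hip H (f n) (g n)))"
      unfolding D_ip using fnin[OF f] fnin[OF g] by (simp add: mult_ac)
    also have "\<dots> = a * hip ?D f g" unfolding D_ip by (rule suminf_mult[OF D_ip_summable[OF f g]])
    finally show "hip ?D (hscale ?D a f) g = a * hip ?D f g" .
  next
    fix f g assume f: "f \<in> hcarrier ?D" and g: "g \<in> hcarrier ?D"
    have "(\<lambda>n. cnj (complex_of_real (?w n) * hip H (f n) (g n))) sums cnj (hip ?D f g)"
      using D_ip_sums[OF f g] by (simp only: sums_cnj)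
    moreover have "(\<lambda>n. cnj (complex_of_real (?w n) * hip H (f n) (g n)))
        = (\<lambda>n. complex_of_real (?w n) * hip H (g n) (f n))"
    proof
      fix n show "cnj (complex_of_real (?w n) * hip H (f n) (g n)) = complex_of_real (?w n) * hip H (g n) (f n)"
        using ip_conj[OF fnin[OF f] fnin[OF g]] by simp
    qed
    ultimately have "(\<lambda>n. complex_of_real (?w n) * hip H (g n) (f n)) sums cnj (hip ?D f g)" by simp
    then show "hip ?D g f = cnj (hip ?D f g)" by (rule sums_unique2[OF D_ip_sums[OF g f]])
  next
    fix f assume f: "f \<in> hcarrier ?D"
    have fs: "summable (\<lambda>n. ?w n * (hnorm H (f n))\<^sup>2)" using f cD by auto
    have "0 \<le> (\<Sum>n. ?w n * (hnorm H (f n))\<^sup>2)"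
      by (rule suminf_nonneg[OF fs]) (simp add: fnin[OF f])
    then show "0 \<le> Re (hip ?D f f)" unfolding D_self[OF f] by simp
  next
    fix f assume f: "f \<in> hcarrier ?D"
    show "Im (hip ?D f f) = 0" unfolding D_self[OF f] by simp
  next
    fix f assume f: "f \<in> hcarrier ?D" and f0: "hip ?D f f = 0"
    have fs: "summable (\<lambda>n. ?w n * (hnorm H (f n))\<^sup>2)" using f cD by auto
    have "(\<Sum>n. ?w n * (hnorm H (f n))\<^sup>2) = 0" using f0 unfolding D_self[OF f] by simp
    then have "\<forall>n. ?w n * (hnorm H (f n))\<^sup>2 = 0"
      using suminf_eq_zero_iff[OF fs] fnin[OF f] by simp
    then have "\<forall>n. f n = hzero H" using nm_zero_iff fnin[OF f] by simp
    then show "f = hzero ?D" by auto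
  qed
qed

end

context setting begin

sublocale Dps: ips "dirichlet \<alpha> H" by unfold_locales (rule D_ips)

definition wt :: "nat \<Rightarrow> real" where "wt n = real (n + 1) powr \<alpha>"

lemma wt_pos: "0 < wt n" unfolding wt_def by simp

lemma acoef_wt: "acoef \<alpha> n = 1 / wt n"
  unfolding acoef_def wt_def by (simp add: powr_minus_divide)

lemma wt_a: "wt n * acoef \<alpha> n = 1"
  using wt_pos[of n] by (simp add: acoef_wt)

definition UU :: "'a \<Rightarrow> nat \<Rightarrow> 'a" where
  "UU x = (\<lambda>n. hscale H (complex_of_real (acoef \<alpha> n)) (Vf ((T ^^ n) x)))"

lemma UU_n_in[simp]: "x \<in> hcarrier H \<Longrightarrow> UU x n \<in> hcarrier H"
  unfolding UU_def by simp

lemma UU_term: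
  assumes x: "x \<in> hcarrier H"
  shows "real (n + 1) powr \<alpha> * (hnorm H (UU x n))\<^sup>2 = acoef \<alpha> n * Re (Qf ((T ^^ n) x) ((T ^^ n) x))"
proof -
  have a: "0 < acoef \<alpha> n" by (rule acoef_pos)
  have "(hnorm H (UU x n))\<^sup>2 = (acoef \<alpha> n)\<^sup>2 * (hnorm H (Vf ((T ^^ n) x)))\<^sup>2"
    unfolding UU_def using x a by (simp add: nm_sc power_mult_distrib)
  also have "(hnorm H (Vf ((T ^^ n) x)))\<^sup>2 = Re (Qf ((T ^^ n) x) ((T ^^ n) x))"
    using x by (simp add: nm_sq)
  finally have "real (n + 1) powr \<alpha> * (hnorm H (UU x n))\<^sup>2 = (wt n * acoef \<alpha> n) * acoef \<alpha> n * Re (Qf ((T ^^ n) x) ((T ^^ n) x))"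
    unfolding wt_def by (simp add: power2_eq_square mult_ac)
  then show ?thesis using wt_a by simp
qed

lemma UU_in: "x \<in> hcarrier H \<Longrightarrow> UU x \<in> hcarrier (dirichlet \<alpha> H)"
proof -
  assume x: "x \<in> hcarrier H"
  have "(\<lambda>n. Re (complex_of_real (acoef \<alpha> n) * Qf ((T ^^ n) x) ((T ^^ n) x))) sums Re (hip H x x)"
    by (rule sums_Re[OF key_identity[OF x x]])
  then have "summable (\<lambda>n. acoef \<alpha> n * Re (Qf ((T ^^ n) x) ((T ^^ n) x)))"
    by (simp add: sums_summable)
  then have "summable (\<lambda>n. real (n + 1) powr \<alpha> * (hnorm H (UU x n))\<^sup>2)"
    using UU_term[OF x] by simp
  then show ?thesis unfolding D_carrier using x by simp
qed

lemma UU_ip: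
  assumes x: "x \<in> hcarrier H" and y: "y \<in> hcarrier H"
  shows "hip (dirichlet \<alpha> H) (UU x) (UU y) = hip H x y"
proof -
  have e: "complex_of_real (real (n + 1) powr \<alpha>) * hip H (UU x n) (UU y n)
      = complex_of_real (acoef \<alpha> n) * Qf ((T ^^ n) x) ((T ^^ n) y)" for n
  proof -
    have "complex_of_real (real (n + 1) powr \<alpha>) * hip H (UU x n) (UU y n)
        = complex_of_real (wt n * acoef \<alpha> n * acoef \<alpha> n) * Qf ((T ^^ n) x) ((T ^^ n) y)"
      unfolding UU_def wt_def using x y by (simp add: mult_ac)
    then show ?thesis using wt_a by simp
  qed
  have "hip (dirichlet \<alpha> H) (UU x) (UU y) = (\<Sum>n. complex_of_real (acoef \<alpha> n) * Qf ((T ^^ n) x) ((T ^^ n) y))"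
    unfolding D_ip e ..
  also have "\<dots> = hip H x y" using sums_unique[OF key_identity[OF x y]] by simp
  finally show ?thesis .
qed

lemma UU_add: "x \<in> hcarrier H \<Longrightarrow> y \<in> hcarrier H \<Longrightarrow> UU (hplus H x y) = hplus (dirichlet \<alpha> H) (UU x) (UU y)"
  unfolding UU_def by (simp add: Vf_add sc_add)

lemma UU_sc: "x \<in> hcarrier H \<Longrightarrow> UU (hscale H a x) = hscale (dirichlet \<alpha> H) a (UU x)"
  unfolding UU_def by (simp add: Vf_sc sc_sc mult.commute)

lemma UU_minus: "x \<in> hcarrier H \<Longrightarrow> y \<in> hcarrier H \<Longrightarrow> UU (hminus H x y) = hminus (dirichlet \<alpha> H) (UU x) (UU y)"
  unfolding hminus_def[of H] hminus_def[of "dirichlet \<alpha> H"] by (simp add: UU_add UU_sc)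

lemma UU_zero: "UU (hzero H) = hzero (dirichlet \<alpha> H)"
proof -
  have "Vf (hzero H) = hzero H"
  proof -
    have "Vf (hscale H 0 (hzero H)) = hscale H 0 (Vf (hzero H))" by (rule Vf_sc) simp
    then show ?thesis by (simp add: sc_zero_l sc_zero_r)
  qed
  then show ?thesis unfolding UU_def by (simp add: sc_zero_r)
qed

lemma UU_nm: "x \<in> hcarrier H \<Longrightarrow> hnorm (dirichlet \<alpha> H) (UU x) = hnorm H x"
  unfolding hnorm_def by (simp add: UU_ip)

lemma UU_inj: "inj_on UU (hcarrier H)"
proof (rule inj_onI)
  fix x y assume x: "x \<in> hcarrier H" and y: "y \<in> hcarrier H" and e: "UU x = UU y"
  have h1: "hnorm H (hminus H x y) = hnorm (dirichlet \<alpha> H) (hminus (dirichlet \<alpha> H) (UU x) (UU y))"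
    using x y by (simp add: UU_nm[symmetric] UU_minus)
  have h2: "hminus (dirichlet \<alpha> H) (UU y) (UU y) = hzero (dirichlet \<alpha> H)"
    unfolding hminus_def[of "dirichlet \<alpha> H"] by (rule Dps.add_neg[OF UU_in[OF y]])
  have "hnorm H (hminus H x y) = 0" using h1 h2 Dps.nm_zero unfolding e by (simp del: D_zero)
  then have "hminus H x y = hzero H" using nm_zero_iff[of "hminus H x y"] x y by simp
  then show "x = y" by (rule minus_zero_eq[OF x y])
qed

definition B0 :: "(nat \<Rightarrow> 'a) \<Rightarrow> nat \<Rightarrow> 'a" where
  "B0 g = (\<lambda>n. hscale H (complex_of_real ((real (n + 2) / real (n + 1)) powr \<alpha>)) (g (Suc n)))"

lemma ratio_wt: "(real (n + 2) / real (n + 1)) powr \<alpha> * wt n = wt (Suc n)"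
  unfolding wt_def by (simp add: powr_divide add.commute)

lemma ratio_nonneg: "0 \<le> (real (n + 2) / real (n + 1)) powr \<alpha>" by simp

lemma ratio_le: "(real (n + 2) / real (n + 1)) powr \<alpha> \<le> 2 powr \<alpha>"
proof -
  have "real (n + 2) / real (n + 1) \<le> 2" by (simp add: field_simps)
  then show ?thesis using a0 by (intro powr_mono2) simp_all
qed

lemma wt_Suc_le: "wt (Suc n) \<le> 2 powr \<alpha> * wt n"
proof -
  have "wt (Suc n) = (real (n + 2) / real (n + 1)) powr \<alpha> * wt n" using ratio_wt[of n] by simp
  also have "\<dots> \<le> 2 powr \<alpha> * wt n" by (rule mult_right_mono[OF ratio_le]) (simp add: less_imp_le wt_pos)
  finally show ?thesis .
qed

lemma Mz_in:
  assumes f: "f \<in> hcarrier (dirichlet \<alpha> H)"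
  shows "mult_z H f \<in> hcarrier (dirichlet \<alpha> H)"
proof -
  have fn: "\<And>n. f n \<in> hcarrier H" and fs: "summable (\<lambda>n. wt n * (hnorm H (f n))\<^sup>2)"
    using f unfolding D_carrier wt_def by auto
  have "summable (\<lambda>m. wt (Suc m) * (hnorm H (f m))\<^sup>2)"
  proof (rule summable_comparison_test')
    show "summable (\<lambda>m. 2 powr \<alpha> * (wt m * (hnorm H (f m))\<^sup>2))" by (rule summable_mult[OF fs])
    fix m show "norm (wt (Suc m) * (hnorm H (f m))\<^sup>2) \<le> 2 powr \<alpha> * (wt m * (hnorm H (f m))\<^sup>2)"
      using wt_Suc_le[of m] wt_pos[of "Suc m"] by (simp add: mult_right_mono mult.assoc[symmetric])
  qed
  then have "summable (\<lambda>m. wt (Suc m) * (hnorm H (mult_z H f (Suc m)))\<^sup>2)" by (simp add: mult_z_def)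
  then have "summable (\<lambda>n. wt n * (hnorm H (mult_z H f n))\<^sup>2)"
    using summable_Suc_iff[of "\<lambda>n. wt n * (hnorm H (mult_z H f n))\<^sup>2"] by simp
  moreover have "\<And>n. mult_z H f n \<in> hcarrier H" using fn by (simp add: mult_z_def)
  ultimately show ?thesis unfolding D_carrier wt_def by simp
qed

lemma B0_in:
  assumes g: "g \<in> hcarrier (dirichlet \<alpha> H)"
  shows "B0 g \<in> hcarrier (dirichlet \<alpha> H)"
proof -
  have gn: "\<And>n. g n \<in> hcarrier H" and gs: "summable (\<lambda>n. wt n * (hnorm H (g n))\<^sup>2)"
    using g unfolding D_carrier wt_def by auto
  have gs1: "summable (\<lambda>n. wt (Suc n) * (hnorm H (g (Suc n)))\<^sup>2)"
    using gs summable_Suc_iff[of "\<lambda>n. wt n * (hnorm H (g n))\<^sup>2"] by simp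
  have "summable (\<lambda>n. wt n * (hnorm H (B0 g n))\<^sup>2)"
  proof (rule summable_comparison_test')
    show "summable (\<lambda>n. 2 powr \<alpha> * (wt (Suc n) * (hnorm H (g (Suc n)))\<^sup>2))" by (rule summable_mult[OF gs1])
    fix n
    define r where "r = (real (n + 2) / real (n + 1)) powr \<alpha>"
    have r0: "0 \<le> r" unfolding r_def by simp
    have "wt n * (hnorm H (B0 g n))\<^sup>2 = r * (r * wt n) * (hnorm H (g (Suc n)))\<^sup>2"
      unfolding B0_def r_def[symmetric] using gn r0 by (simp add: nm_sc power2_eq_square mult_ac)
    also have "\<dots> = r * (wt (Suc n) * (hnorm H (g (Suc n)))\<^sup>2)" using ratio_wt[of n] unfolding r_def by (simp add: mult_ac)
    also have "\<dots> \<le> 2 powr \<alpha> * (wt (Suc n) * (hnorm H (g (Suc n)))\<^sup>2)"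
      using ratio_le[of n] wt_pos[of "Suc n"] unfolding r_def by (intro mult_right_mono) simp_all
    finally show "norm (wt n * (hnorm H (B0 g n))\<^sup>2) \<le> 2 powr \<alpha> * (wt (Suc n) * (hnorm H (g (Suc n)))\<^sup>2)"
      using wt_pos[of n] by simp
  qed
  moreover have "\<And>n. B0 g n \<in> hcarrier H" using gn by (simp add: B0_def)
  ultimately show ?thesis unfolding D_carrier wt_def by simp
qed

lemma adj:
  assumes f: "f \<in> hcarrier (dirichlet \<alpha> H)" and g: "g \<in> hcarrier (dirichlet \<alpha> H)"
  shows "hip (dirichlet \<alpha> H) (mult_z H f) g = hip (dirichlet \<alpha> H) f (B0 g)"
proof -
  have fn: "\<And>n. f n \<in> hcarrier H" and gn: "\<And>n. g n \<in> hcarrier H" using f g unfolding D_carrier by auto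
  define l where "l n = complex_of_real (real (n + 1) powr \<alpha>) * hip H (mult_z H f n) (g n)" for n
  have ls: "summable l" unfolding l_def by (rule D_ip_summable[OF Mz_in[OF f] g])
  have l0: "l 0 = 0" unfolding l_def mult_z_def using gn by simp
  have "hip (dirichlet \<alpha> H) (mult_z H f) g = suminf l" unfolding D_ip l_def ..
  also have "\<dots> = (\<Sum>m. l (Suc m))" using suminf_split_head[OF ls] l0 by simp
  also have "\<dots> = hip (dirichlet \<alpha> H) f (B0 g)"
    unfolding D_ip
  proof (rule arg_cong[where f=suminf], rule ext)
    fix m
    have "complex_of_real (real (m + 1) powr \<alpha>) * hip H (f m) (B0 g m)
        = complex_of_real ((real (m + 2) / real (m + 1)) powr \<alpha> * wt m) * hip H (f m) (g (Suc m))"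
      unfolding B0_def wt_def using fn gn by (simp add: mult_ac)
    also have "\<dots> = complex_of_real (wt (Suc m)) * hip H (f m) (g (Suc m))" by (simp only: ratio_wt)
    also have "\<dots> = l (Suc m)" unfolding l_def wt_def mult_z_def by simp
    finally show "l (Suc m) = complex_of_real (real (m + 1) powr \<alpha>) * hip H (f m) (B0 g m)" by simp
  qed
  finally show ?thesis .
qed

lemma Dstar_eq:
  assumes g: "g \<in> hcarrier (dirichlet \<alpha> H)"
  shows "Dstar \<alpha> H g = B0 g"
proof -
  let ?P = "\<lambda>B. (\<forall>y\<in>hcarrier (dirichlet \<alpha> H). B y \<in> hcarrier (dirichlet \<alpha> H)) \<and>
      (\<forall>x\<in>hcarrier (dirichlet \<alpha> H). \<forall>y\<in>hcarrier (dirichlet \<alpha> H).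
          hip (dirichlet \<alpha> H) (mult_z H x) y = hip (dirichlet \<alpha> H) x (B y))"
  have PB: "?P B0" using B0_in adj by blast
  have P: "?P (Dstar \<alpha> H)" unfolding Dstar_def adjoint_def by (rule someI[of ?P, OF PB])
  have Bg: "Dstar \<alpha> H g \<in> hcarrier (dirichlet \<alpha> H)" using P g by blast
  have "hip (dirichlet \<alpha> H) z (Dstar \<alpha> H g) = hip (dirichlet \<alpha> H) z (B0 g)"
    if z: "z \<in> hcarrier (dirichlet \<alpha> H)" for z
    using P adj[OF z g] z g by auto
  show ?thesis
  proof (rule Dps.ip_ext[OF Bg B0_in[OF g]])
    fix z assume z: "z \<in> hcarrier (dirichlet \<alpha> H)"
    have "hip (dirichlet \<alpha> H) (Dstar \<alpha> H g) z = cnj (hip (dirichlet \<alpha> H) z (Dstar \<alpha> H g))"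
      by (rule Dps.ip_conj[OF z Bg])
    also have "\<dots> = cnj (hip (dirichlet \<alpha> H) z (B0 g))" using P adj[OF z g] z g by auto
    also have "\<dots> = hip (dirichlet \<alpha> H) (B0 g) z" by (rule Dps.ip_conj[OF z B0_in[OF g], symmetric])
    finally show "hip (dirichlet \<alpha> H) (Dstar \<alpha> H g) z = hip (dirichlet \<alpha> H) (B0 g) z" .
  qed
qed

lemma B0_UU:
  assumes x: "x \<in> hcarrier H"
  shows "B0 (UU x) = UU (T x)"
proof
  fix n
  define r where "r = (real (n + 2) / real (n + 1)) powr \<alpha>"
  have "r * acoef \<alpha> (Suc n) = acoef \<alpha> n"
    using ratio_wt[of n] wt_pos[of n] wt_pos[of "Suc n"] unfolding acoef_wt r_def[symmetric] by (simp add: field_simps)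
  then have cr: "complex_of_real r * complex_of_real (acoef \<alpha> (Suc n)) = complex_of_real (acoef \<alpha> n)"
    by (simp only: of_real_mult[symmetric])
  have TS: "(T ^^ Suc n) x = (T ^^ n) (T x)" by (simp only: funpow_Suc_right o_apply)
  have "B0 (UU x) n = hscale H (complex_of_real r) (hscale H (complex_of_real (acoef \<alpha> (Suc n))) (Vf ((T ^^ Suc n) x)))"
    unfolding B0_def UU_def r_def by simp
  also have "\<dots> = hscale H (complex_of_real r * complex_of_real (acoef \<alpha> (Suc n))) (Vf ((T ^^ Suc n) x))"
    by (rule sc_sc) (simp add: x)
  also have "\<dots> = hscale H (complex_of_real (acoef \<alpha> n)) (Vf ((T ^^ n) (T x)))" by (simp only: cr TS)
  also have "\<dots> = UU (T x) n" unfolding UU_def ..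
  finally show "B0 (UU x) n = UU (T x) n" .
qed

lemma N_closed:
  assumes X: "\<And>n. X n \<in> UU ` hcarrier H" and f: "f \<in> hcarrier (dirichlet \<alpha> H)"
    and lim: "(\<lambda>n. hnorm (dirichlet \<alpha> H) (hminus (dirichlet \<alpha> H) (X n) f)) \<longlonglongrightarrow> 0"
  shows "f \<in> UU ` hcarrier H"
proof -
  have "\<forall>n. \<exists>x. x \<in> hcarrier H \<and> X n = UU x" using X by blast
  then obtain xs where xs: "\<And>n. xs n \<in> hcarrier H" "\<And>n. X n = UU (xs n)" by metis
  have XD: "X n \<in> hcarrier (dirichlet \<alpha> H)" for n using xs UU_in by simp
  have dist: "hnorm H (hminus H (xs m) (xs n)) = hnorm (dirichlet \<alpha> H) (hminus (dirichlet \<alpha> H) (X m) (X n))" for m n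
    using xs by (simp add: UU_nm[symmetric] UU_minus)
  have cauchy: "\<exists>N. \<forall>m\<ge>N. \<forall>n\<ge>N. hnorm H (hminus H (xs m) (xs n)) < e" if e: "0 < e" for e
  proof -
    have "\<exists>no. \<forall>n\<ge>no. norm (hnorm (dirichlet \<alpha> H) (hminus (dirichlet \<alpha> H) (X n) f) - 0) < e / 2"
      using LIMSEQ_D[OF lim, of "e/2"] e by simp
    then obtain N where N0: "\<And>n. n \<ge> N \<Longrightarrow> norm (hnorm (dirichlet \<alpha> H) (hminus (dirichlet \<alpha> H) (X n) f) - 0) < e / 2"
      by blast
    have N: "hnorm (dirichlet \<alpha> H) (hminus (dirichlet \<alpha> H) (X n) f) < e / 2" if "n \<ge> N" for n
      using N0[OF that] Dps.nm_nonneg[OF Dps.minus_in[OF XD f]] by simp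
    show ?thesis
    proof (intro exI allI impI)
      fix m n assume m: "N \<le> m" and n: "N \<le> n"
      have "hnorm H (hminus H (xs m) (xs n)) \<le> hnorm (dirichlet \<alpha> H) (hminus (dirichlet \<alpha> H) (X m) f)
          + hnorm (dirichlet \<alpha> H) (hminus (dirichlet \<alpha> H) f (X n))"
        unfolding dist by (rule Dps.nm_tri_minus[OF XD f XD])
      also have "hnorm (dirichlet \<alpha> H) (hminus (dirichlet \<alpha> H) f (X n)) = hnorm (dirichlet \<alpha> H) (hminus (dirichlet \<alpha> H) (X n) f)"
        by (rule Dps.nm_minus_sym[OF f XD])
      finally show "hnorm H (hminus H (xs m) (xs n)) < e" using N[OF m] N[OF n] by simp
    qed
  qed
  obtain x where x: "x \<in> hcarrier H" and cx: "(\<lambda>n. hnorm H (hminus H (xs n) x)) \<longlonglongrightarrow> 0"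
    using hs cauchy xs unfolding hilbert_space_def by blast
  have "Dps.conv X (UU x)"
    unfolding Dps.conv_def using cx xs x by (simp add: UU_nm[symmetric] UU_minus)
  moreover have "Dps.conv X f" unfolding Dps.conv_def by (rule lim)
  ultimately have "UU x = f" by (rule Dps.conv_unique[OF XD UU_in[OF x] f])
  then show ?thesis using x by blast
qed

lemma final:
  "\<exists>(E :: 'a chs) N. hilbert_space E \<and> separable E \<and>
     closed_subspace (dirichlet \<alpha> E) N \<and> Dstar \<alpha> E ` N \<subseteq> N \<and>
     unitarily_equivalent H T (dirichlet \<alpha> E) N (Dstar \<alpha> E)"
proof (intro exI conjI)
  let ?N = "UU ` hcarrier H"
  show "hilbert_space H" by (rule hs)
  show "separable H" by (rule sep)
  show "closed_subspace (dirichlet \<alpha> H) ?N"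
    unfolding closed_subspace_def
  proof (intro conjI allI ballI impI)
    show "?N \<subseteq> hcarrier (dirichlet \<alpha> H)" using UU_in by blast
    show "hzero (dirichlet \<alpha> H) \<in> ?N" using UU_zero[symmetric] zero_in by blast
    fix u v assume "u \<in> ?N" "v \<in> ?N"
    then obtain x y where "x \<in> hcarrier H" "y \<in> hcarrier H" "u = UU x" "v = UU y" by blast
    then show "hplus (dirichlet \<alpha> H) u v \<in> ?N" using UU_add[symmetric] add_in by blast
  next
    fix a u assume "u \<in> ?N"
    then obtain x where "x \<in> hcarrier H" "u = UU x" by blast
    then show "hscale (dirichlet \<alpha> H) a u \<in> ?N" using UU_sc[symmetric] sc_in by blast
  next
    fix X f assume "(\<forall>n. X n \<in> ?N) \<and> f \<in> hcarrier (dirichlet \<alpha> H) \<and>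
        (\<lambda>n. hnorm (dirichlet \<alpha> H) (hminus (dirichlet \<alpha> H) (X n) f)) \<longlonglongrightarrow> 0"
    then show "f \<in> ?N" using N_closed by blast
  qed
  show "Dstar \<alpha> H ` ?N \<subseteq> ?N"
  proof
    fix u assume "u \<in> Dstar \<alpha> H ` ?N"
    then obtain x where x: "x \<in> hcarrier H" and u: "u = Dstar \<alpha> H (UU x)" by blast
    then have "u = UU (T x)" using Dstar_eq[OF UU_in[OF x]] B0_UU[OF x] by simp
    then show "u \<in> ?N" using x by simp
  qed
  show "unitarily_equivalent H T (dirichlet \<alpha> H) ?N (Dstar \<alpha> H)"
    unfolding unitarily_equivalent_def
  proof (intro exI[of _ UU] conjI ballI allI)
    show "bij_betw UU (hcarrier H) ?N" using UU_inj by (simp add: bij_betw_def)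
    fix x y assume "x \<in> hcarrier H" "y \<in> hcarrier H"
    then show "UU (hplus H x y) = hplus (dirichlet \<alpha> H) (UU x) (UU y)" by (rule UU_add)
  next
    fix a x assume "x \<in> hcarrier H"
    then show "UU (hscale H a x) = hscale (dirichlet \<alpha> H) a (UU x)" by (rule UU_sc)
  next
    fix x y assume "x \<in> hcarrier H" "y \<in> hcarrier H"
    then show "hip (dirichlet \<alpha> H) (UU x) (UU y) = hip H x y" by (rule UU_ip)
  next
    fix x assume x: "x \<in> hcarrier H"
    show "UU (T x) = Dstar \<alpha> H (UU x)" using Dstar_eq[OF UU_in[OF x]] B0_UU[OF x] by simp
  qed
qed

end

theorem lemma4p1:
  fixes \<alpha> :: real and H :: "'h chs" and T :: "'h \<Rightarrow> 'h"
  assumes "0 < \<alpha>" and "\<alpha> \<le> 1"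
    and "hilbert_space H" and "separable H"
    and "bounded_op H T"
    and "summable (\<lambda>s. (opnorm H (T ^^ Suc s))\<^sup>2 / real (Suc s + 1) powr \<alpha>)"
    and "(\<Sum>s. (opnorm H (T ^^ Suc s))\<^sup>2 / real (Suc s + 1) powr \<alpha>) \<le> 1"
  shows "\<exists>(E :: 'h chs) N. hilbert_space E \<and> separable E \<and>
           closed_subspace (dirichlet \<alpha> E) N \<and> Dstar \<alpha> E ` N \<subseteq> N \<and>
           unitarily_equivalent H T (dirichlet \<alpha> E) N (Dstar \<alpha> E)"
proof -
  interpret setting \<alpha> H T by (rule setting.intro[OF assms])
  show ?thesis by (rule final)
qed

end
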